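(* Let $\{x_k\}$ be the sequence of random iterates generated by the GSKM algorithm. With the choice of parameters $0 < \delta < 2$ and $0 \leq \xi \leq 1$, the sequence of iterates $\{x_k\}$ converges and the following results hold: 1. Take $\phi_1 = (1-\xi) h(\delta)$, $\phi_2 = \xi h(\delta)$, $\phi = \frac{-\phi_1+\sqrt{\phi_1^2+4\phi_2}}{2}$ and $\rho = \phi+\phi_1$. Then $\mathbb{E}[d(x_{k+1},P)^2] \leq \rho^{k}(1+\phi)\, d(x_0,P)^2$ and $\mathbb{E}[f(x_k)] \leq \frac{\mu_2(1+\phi)}{2}\rho^{k} d(x_0,P)^2$. 2. With the same $\phi_1,\phi_2,\phi,\rho$ and $R_1 = \frac{1+\phi}{\phi+\rho}$, $R_2 = \frac{1-\rho}{\phi+\rho}$, $R_3 = \frac{\rho+\phi_2}{\phi+\rho}$, $R_4 = \frac{\phi-\phi_2}{\phi+\rho}$, for $k$ even: $\mathbb{E}[d(x_{k+1},P)^2] \leq (R_1\rho^{k+1}+R_2\phi^{k+1})\, d(x_0,P)^2$ and $\mathbb{E}[d(x_k,P)^2] \leq (R_1\rho^{k}-R_2\phi^{k})\, d(x_0,P)^2$; for $k$ odd: $\mathbb{E}[d(x_{k+1},P)^2] \leq (R_3\rho^{k}-R_4\phi^{k})\, d(x_0,P)^2$ and $\mathbb{E}[d(x_k,P)^2] \leq (R_3\rho^{k-1}+R_4\phi^{k-1})\, d(x_0,P)^2$, where $0 \leq \phi,\phi_1,\phi_2 < 1$ and $0 < \rho = \phi+\phi_1 < 1$. 3. The average iterate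 $\tilde{x}_k = \frac{1}{k}\sum_{l=1}^{k} x_l$ satisfies $\mathbb{E}[d(\tilde{x}_k,P)^2] \leq \frac{(1+\phi)\, d(x_0,P)^2}{k(1-\rho)}$ and $\mathbb{E}[f(\tilde{x}_k)] \leq \frac{(1+\xi)\, d(x_0,P)^2}{2\delta k(2-\delta)}$.
   Context: Linear feasibility problem $Ax \leq b$ with $A \in \mathbb{R}^{m\times n}$, $b \in \mathbb{R}^m$, assumed consistent, with rows $a_i^T$ normalized ($\|a_i\|=1$). $P = \{x : Ax \leq b\}$ is the feasible region, $\mathcal{P}(x)$ the Euclidean projection onto $P$ and $d(x,P) = \|x-\mathcal{P}(x)\|$. Sampling: at each iteration a set $\tau$ of $\beta$ rows ($1\le\beta\le m$) is chosen uniformly at random among all $\binom{m}{\beta}$ subsets, and $i^* = \arg\max_{i\in\tau}(a_i^Tx-b_i)^+$; $\mathbb{E}_{\mathbb{S}}$ denotes expectation over this sampling. $f(x) = \mathbb{E}_{\mathbb{S}}\big[\tfrac12 |(a_{i^*}^Tx-b_{i^*})^+|^2\big]$. $L$ is the Hoffman constant, i.e. $d(x,P)^2 \leq L^2\|(Ax-b)^+\|^2$ for all $x$; $\mu_1 = \frac{1}{mL^2}$, $\mu_2 = \min\{1, \frac{\beta}{m}\lambda_{\max}(A^TA)\}$; $\eta = 2\delta-\delta^2$ and $h(\delta) = 1-\eta\mu_1$. GSKM algorithm: start with $x_1 = x_0$, $z_1=z_0$; for $k\ge1$, sample $\tau_k$, pick $i^*$ for $x_k$, set $z_k = x_k - \delta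 (a_{i^*}^Tx_k-b_{i^*})^+ a_{i^*}$ and $x_{k+1} = (1-\xi)z_k + \xi z_{k-1}$. *)

theory Defs
  imports "HOL-Analysis.Analysis" "HOL-Probability.Probability"
begin

text \<open>Linear system A x \<le> b: rows a i (i < m), right-hand sides b i.\<close>

definition resid :: "(nat \<Rightarrow> real^'n) \<Rightarrow> (nat \<Rightarrow> real) \<Rightarrow> real^'n \<Rightarrow> nat \<Rightarrow> real" where
  "resid a b x i = max 0 (a i \<bullet> x - b i)"

definition feas :: "nat \<Rightarrow> (nat \<Rightarrow> real^'n) \<Rightarrow> (nat \<Rightarrow> real) \<Rightarrow> (real^'n) set" where
  "feas m a b = {x. \<forall>i<m. a i \<bullet> x \<le> b i}"

definition subsets_of :: "nat \<Rightarrow> nat \<Rightarrow> nat set set" where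
  "subsets_of m \<beta> = {\<tau>. \<tau> \<subseteq> {..<m} \<and> card \<tau> = \<beta>}"

text \<open>i* = argmax over tau of the positive residual (ties: smallest index).\<close>
definition pick :: "(nat \<Rightarrow> real^'n) \<Rightarrow> (nat \<Rightarrow> real) \<Rightarrow> real^'n \<Rightarrow> nat set \<Rightarrow> nat" where
  "pick a b x \<tau> = (LEAST i. i \<in> \<tau> \<and> (\<forall>j\<in>\<tau>. resid a b x j \<le> resid a b x i))"

definition skm_step :: "(nat \<Rightarrow> real^'n) \<Rightarrow> (nat \<Rightarrow> real) \<Rightarrow> real \<Rightarrow> nat set \<Rightarrow> real^'n \<Rightarrow> real^'n" where
  "skm_step a b \<delta> \<tau> x = x - (\<delta> * resid a b x (pick a b x \<tau>)) *\<^sub>R a (pick a b x \<tau>)"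

text \<open>gskm_Y ts k = (x_{k+1}, z_k) for k \<ge> 1, where tau_k = ts ! (k-1);
  the convention z_0 = z_1 gives x_2 = z_1.\<close>
fun gskm_Y :: "(nat \<Rightarrow> real^'n) \<Rightarrow> (nat \<Rightarrow> real) \<Rightarrow> real \<Rightarrow> real \<Rightarrow> real^'n \<Rightarrow> nat set list
    \<Rightarrow> nat \<Rightarrow> (real^'n) \<times> (real^'n)" where
  "gskm_Y a b \<delta> \<xi> x0 ts 0 = (x0, x0)"
| "gskm_Y a b \<delta> \<xi> x0 ts (Suc k) =
     (let xk = fst (gskm_Y a b \<delta> \<xi> x0 ts k);
          zprev = snd (gskm_Y a b \<delta> \<xi> x0 ts k);
          z = skm_step a b \<delta> (ts ! k) xk;
          zp = (if k = 0 then z else zprev)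
      in ((1 - \<xi>) *\<^sub>R z + \<xi> *\<^sub>R zp, z))"

text \<open>The GSKM iterate x_k (x_0 = x_1 = initial point) as a function of the sampled sets.\<close>
definition gskm_x :: "(nat \<Rightarrow> real^'n) \<Rightarrow> (nat \<Rightarrow> real) \<Rightarrow> real \<Rightarrow> real \<Rightarrow> real^'n \<Rightarrow> nat set list
    \<Rightarrow> nat \<Rightarrow> real^'n" where
  "gskm_x a b \<delta> \<xi> x0 ts k = (if k = 0 then x0 else fst (gskm_Y a b \<delta> \<xi> x0 ts (k - 1)))"

text \<open>Sequences (tau_1,...,tau_N) of independent uniform samples: uniform distribution
  on all length-N lists of beta-subsets.\<close>
definition sample_seqs :: "nat \<Rightarrow> nat \<Rightarrow> nat \<Rightarrow> nat set list set" where
  "sample_seqs m \<beta> N = {ts. length ts = N \<and> set ts \<subseteq> subsets_of m \<beta>}"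

definition Exp :: "nat \<Rightarrow> nat \<Rightarrow> nat \<Rightarrow> (nat set list \<Rightarrow> real) \<Rightarrow> real" where
  "Exp m \<beta> N g = measure_pmf.expectation (pmf_of_set (sample_seqs m \<beta> N)) g"

definition fobj :: "nat \<Rightarrow> nat \<Rightarrow> (nat \<Rightarrow> real^'n) \<Rightarrow> (nat \<Rightarrow> real) \<Rightarrow> real^'n \<Rightarrow> real" where
  "fobj m \<beta> a b x = measure_pmf.expectation (pmf_of_set (subsets_of m \<beta>))
      (\<lambda>\<tau>. (1/2) * (resid a b x (pick a b x \<tau>))\<^sup>2)"

definition AtA :: "nat \<Rightarrow> (nat \<Rightarrow> real^'n) \<Rightarrow> real^'n^'n" where
  "AtA m a = (\<chi> i j. \<Sum>l<m. a l $ i * a l $ j)"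

definition is_eigenvalue :: "real^'n^'n \<Rightarrow> real \<Rightarrow> bool" where
  "is_eigenvalue M c \<longleftrightarrow> (\<exists>v. v \<noteq> 0 \<and> M *v v = c *\<^sub>R v)"

definition lambda_max :: "real^'n^'n \<Rightarrow> real" where
  "lambda_max M = Max {c. is_eigenvalue M c}"

end

theory Submission
  imports Defs
begin

lemma feas_closed: "closed (feas m a b)"
proof -
  have "feas m a b = (\<Inter>i\<in>{..<m}. {x. a i \<bullet> x \<le> b i})" by (auto simp: feas_def)
  thus ?thesis by (auto intro!: closed_INT closed_halfspace_le)
qed

lemma feas_convex: "convex (feas m a b)"
proof -
  have "feas m a b = (\<Inter>i\<in>{..<m}. {x. a i \<bullet> x \<le> b i})" by (auto simp: feas_def)
  thus ?thesis by (auto intro!: convex_INT convex_halfspace_le)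
qed

lemma proj_exists:
  assumes "feas m a b \<noteq> {}"
  obtains p where "p \<in> feas m a b" "infdist y (feas m a b) = norm (y - p)"
  using infdist_attains_inf[OF feas_closed assms, of y] by (metis dist_norm)

lemma convex_sq:
  assumes "convex_on UNIV g" "\<And>x. g x \<ge> 0"
  shows "convex_on UNIV (\<lambda>x. (g x :: real)\<^sup>2)"
proof (rule convex_onI)
  fix t :: real and x y assume t: "0 < t" "t < 1"
  have "g ((1 - t) *\<^sub>R x + t *\<^sub>R y) \<le> (1 - t) * g x + t * g y"
    using convex_onD[OF assms(1), of t x y] t by auto
  moreover have "0 \<le> g ((1 - t) *\<^sub>R x + t *\<^sub>R y)" by (rule assms(2))
  ultimately have "(g ((1 - t) *\<^sub>R x + t *\<^sub>R y))\<^sup>2 \<le> ((1 - t) * g x + t * g y)\<^sup>2"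
    by (simp add: power_mono)
  also have "\<dots> \<le> (1 - t) * (g x)\<^sup>2 + t * (g y)\<^sup>2"
  proof -
    have "(1 - t) * (g x)\<^sup>2 + t * (g y)\<^sup>2 - ((1 - t) * g x + t * g y)\<^sup>2 = t * (1 - t) * (g x - g y)\<^sup>2"
      by (simp add: power2_eq_square algebra_simps)
    moreover have "t * (1 - t) * (g x - g y)\<^sup>2 \<ge> 0" using t by auto
    ultimately show ?thesis by linarith
  qed
  finally show "(g ((1 - t) *\<^sub>R x + t *\<^sub>R y))\<^sup>2 \<le> (1 - t) * (g x)\<^sup>2 + t * (g y)\<^sup>2" .
qed simp

lemma infdist_convex_on:
  fixes a :: "nat \<Rightarrow> real^'n"
  assumes "feas m a b \<noteq> {}"
  shows "convex_on UNIV (\<lambda>x. infdist x (feas m a b))"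
proof (rule convex_onI)
  fix t :: real and x y :: "real^'n" assume t: "0 < t" "t < 1"
  obtain p where p: "p \<in> feas m a b" "infdist x (feas m a b) = norm (x - p)" using proj_exists[OF assms] by blast
  obtain q where q: "q \<in> feas m a b" "infdist y (feas m a b) = norm (y - q)" using proj_exists[OF assms] by blast
  have mem: "(1 - t) *\<^sub>R p + t *\<^sub>R q \<in> feas m a b"
    using feas_convex[of m a b] p q t unfolding convex_def by auto
  have "infdist ((1 - t) *\<^sub>R x + t *\<^sub>R y) (feas m a b) \<le> dist ((1 - t) *\<^sub>R x + t *\<^sub>R y) ((1 - t) *\<^sub>R p + t *\<^sub>R q)"
    by (rule infdist_le[OF mem])
  also have "\<dots> = norm ((1 - t) *\<^sub>R (x - p) + t *\<^sub>R (y - q))"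
    by (simp add: dist_norm algebra_simps)
  also have "\<dots> \<le> norm ((1 - t) *\<^sub>R (x - p)) + norm (t *\<^sub>R (y - q))" by (rule norm_triangle_ineq)
  also have "\<dots> = (1 - t) * norm (x - p) + t * norm (y - q)" using t by simp
  finally show "infdist ((1 - t) *\<^sub>R x + t *\<^sub>R y) (feas m a b) \<le> (1 - t) * infdist x (feas m a b) + t * infdist y (feas m a b)"
    using p q by simp
qed simp

lemma infdist_sq_convex_on:
  fixes a :: "nat \<Rightarrow> real^'n"
  assumes "feas m a b \<noteq> {}"
  shows "convex_on UNIV (\<lambda>x. (infdist x (feas m a b))\<^sup>2)"
  by (rule convex_sq[OF infdist_convex_on[OF assms]]) (simp add: infdist_nonneg)

lemma pick_props:
  assumes "finite \<tau>" "\<tau> \<noteq> {}"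
  shows "pick a b x \<tau> \<in> \<tau> \<and> (\<forall>j\<in>\<tau>. resid a b x j \<le> resid a b x (pick a b x \<tau>))"
proof -
  let ?r = "resid a b x"
  have "Max (?r ` \<tau>) \<in> ?r ` \<tau>" using Max_in[of "?r ` \<tau>"] assms by auto
  then obtain i where i: "i \<in> \<tau>" "?r i = Max (?r ` \<tau>)" by (metis imageE)
  have "\<forall>j\<in>\<tau>. ?r j \<le> ?r i" using i assms by auto
  hence ex: "\<exists>i. i \<in> \<tau> \<and> (\<forall>j\<in>\<tau>. ?r j \<le> ?r i)" using i by blast
  show ?thesis unfolding pick_def by (rule LeastI_ex[OF ex])
qed

lemma resid_nonneg: "resid a b x i \<ge> 0" by (simp add: resid_def)

lemma resid_convex_on: fixes a :: "nat \<Rightarrow> real^'n" shows "convex_on UNIV (\<lambda>x. resid a b x i)"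
proof (rule convex_onI)
  fix t :: real and x y :: "real^'n" assume t: "0 < t" "t < 1"
  have "a i \<bullet> ((1 - t) *\<^sub>R x + t *\<^sub>R y) - b i = (1 - t) * (a i \<bullet> x - b i) + t * (a i \<bullet> y - b i)"
    by (simp add: inner_add_right algebra_simps)
  also have "\<dots> \<le> (1 - t) * resid a b x i + t * resid a b y i"
    using t by (intro add_mono mult_left_mono) (auto simp: resid_def)
  finally show "resid a b ((1 - t) *\<^sub>R x + t *\<^sub>R y) i \<le> (1 - t) * resid a b x i + t * resid a b y i"
    using t resid_nonneg[of a b x i] resid_nonneg[of a b y i]
    by (simp add: resid_def)
qed simp

lemma norm_sq_step:
  fixes v w :: "real^'n"
  shows "(norm (v - c *\<^sub>R w))\<^sup>2 = (norm v)\<^sup>2 - 2 * c * (w \<bullet> v) + c\<^sup>2 * (norm w)\<^sup>2"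
  unfolding power2_norm_eq_inner by (simp add: inner_diff_left inner_diff_right inner_commute algebra_simps power2_eq_square)

lemma one_step:
  fixes a :: "nat \<Rightarrow> real^'n"
  assumes ne: "feas m a b \<noteq> {}" and rows: "\<forall>i<m. norm (a i) = 1"
    and tau: "\<tau> \<subseteq> {..<m}" "\<tau> \<noteq> {}" and dpos: "0 < \<delta>"
  shows "(infdist (skm_step a b \<delta> \<tau> y) (feas m a b))\<^sup>2
     \<le> (infdist y (feas m a b))\<^sup>2 - (2 * \<delta> - \<delta>\<^sup>2) * (resid a b y (pick a b y \<tau>))\<^sup>2"
proof -
  let ?P = "feas m a b"
  let ?i = "pick a b y \<tau>"
  let ?r = "resid a b y ?i"
  have fin: "finite \<tau>" using tau finite_subset by blast
  have iin: "?i \<in> \<tau>" using pick_props[OF fin tau(2)] by blast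
  hence im: "?i < m" using tau by auto
  have na: "norm (a ?i) = 1" using rows im by auto
  obtain p where p: "p \<in> ?P" "infdist y ?P = norm (y - p)" using proj_exists[OF ne] by blast
  have ap: "a ?i \<bullet> p \<le> b ?i" using p(1) im by (auto simp: feas_def)
  have key: "?r * (a ?i \<bullet> (y - p)) \<ge> ?r\<^sup>2"
  proof (cases "?r = 0")
    case True thus ?thesis by simp
  next
    case False
    hence r: "?r = a ?i \<bullet> y - b ?i" "?r > 0" by (auto simp: resid_def max_def split: if_splits)
    have "a ?i \<bullet> (y - p) \<ge> ?r" using r ap by (simp add: inner_diff_right)
    hence "?r * (a ?i \<bullet> (y - p)) \<ge> ?r * ?r" using r(2) by (intro mult_left_mono) auto
    thus ?thesis by (simp add: power2_eq_square)
  qed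
  have mem: "skm_step a b \<delta> \<tau> y - p = (y - p) - (\<delta> * ?r) *\<^sub>R a ?i" by (simp add: skm_step_def)
  have "infdist (skm_step a b \<delta> \<tau> y) ?P \<le> norm (skm_step a b \<delta> \<tau> y - p)"
    using infdist_le[OF p(1)] by (simp add: dist_norm)
  hence "(infdist (skm_step a b \<delta> \<tau> y) ?P)\<^sup>2 \<le> (norm (skm_step a b \<delta> \<tau> y - p))\<^sup>2"
    by (simp add: infdist_nonneg power_mono)
  also have "\<dots> = (norm (y - p))\<^sup>2 - 2 * (\<delta> * ?r) * (a ?i \<bullet> (y - p)) + (\<delta> * ?r)\<^sup>2"
    unfolding mem norm_sq_step na by simp
  also have "\<dots> \<le> (norm (y - p))\<^sup>2 - 2 * \<delta> * ?r\<^sup>2 + (\<delta> * ?r)\<^sup>2"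
    using mult_left_mono[OF key, of "2 * \<delta>"] dpos by (simp add: algebra_simps)
  also have "\<dots> = (infdist y ?P)\<^sup>2 - (2 * \<delta> - \<delta>\<^sup>2) * ?r\<^sup>2" using p(2) by (simp add: algebra_simps power2_eq_square)
  finally show ?thesis .
qed

lemma resid_le_dist:
  fixes a :: "nat \<Rightarrow> real^'n"
  assumes "p \<in> feas m a b" "i < m" "norm (a i) = 1"
  shows "resid a b y i \<le> \<bar>a i \<bullet> (y - p)\<bar>"
proof -
  have "a i \<bullet> p \<le> b i" using assms by (auto simp: feas_def)
  thus ?thesis by (auto simp: resid_def inner_diff_right)
qed

lemma resid_le_norm:
  fixes a :: "nat \<Rightarrow> real^'n"
  assumes "p \<in> feas m a b" "i < m" "norm (a i) = 1"
  shows "resid a b y i \<le> norm (y - p)"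
proof -
  have "\<bar>a i \<bullet> (y - p)\<bar> \<le> norm (a i) * norm (y - p)" by (rule Cauchy_Schwarz_ineq2)
  thus ?thesis using resid_le_dist[OF assms, of y] assms(3) by simp
qed

lemma subsets_fin: "finite (subsets_of m \<beta>)"
  unfolding subsets_of_def by (rule finite_subset[of _ "Pow {..<m}"]) auto

lemma subsets_card: "card (subsets_of m \<beta>) = m choose \<beta>"
  unfolding subsets_of_def using n_subsets[of "{..<m}" \<beta>] by simp

lemma subsets_ne: "\<beta> \<le> m \<Longrightarrow> subsets_of m \<beta> \<noteq> {}"
proof -
  assume "\<beta> \<le> m"
  hence "{..<\<beta>} \<in> subsets_of m \<beta>" by (auto simp: subsets_of_def)
  thus ?thesis by blast
qed

lemma subsets_elem: "\<tau> \<in> subsets_of m \<beta> \<Longrightarrow> \<tau> \<subseteq> {..<m} \<and> card \<tau> = \<beta> \<and> finite \<tau>"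
  unfolding subsets_of_def using finite_subset by auto

lemma count_containing:
  assumes "i < m" "1 \<le> \<beta>"
  shows "card {\<tau>\<in>subsets_of m \<beta>. i \<in> \<tau>} = (m - 1) choose (\<beta> - 1)"
proof -
  let ?B = "{B. B \<subseteq> {..<m} - {i} \<and> card B = \<beta> - 1}"
  have eq: "{\<tau>\<in>subsets_of m \<beta>. i \<in> \<tau>} = insert i ` ?B"
  proof
    show "{\<tau>\<in>subsets_of m \<beta>. i \<in> \<tau>} \<subseteq> insert i ` ?B"
    proof
      fix \<tau> assume t: "\<tau> \<in> {\<tau>\<in>subsets_of m \<beta>. i \<in> \<tau>}"
      hence f: "finite \<tau>" "\<tau> \<subseteq> {..<m}" "card \<tau> = \<beta>" "i \<in> \<tau>" using subsets_elem by auto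
      have "\<tau> - {i} \<in> ?B" using f by auto
      moreover have "\<tau> = insert i (\<tau> - {i})" using f by auto
      ultimately show "\<tau> \<in> insert i ` ?B" by blast
    qed
  next
    show "insert i ` ?B \<subseteq> {\<tau>\<in>subsets_of m \<beta>. i \<in> \<tau>}"
    proof
      fix \<tau> assume "\<tau> \<in> insert i ` ?B"
      then obtain B where B: "B \<subseteq> {..<m} - {i}" "card B = \<beta> - 1" "\<tau> = insert i B" by blast
      have "finite B" using B(1) finite_subset by blast
      moreover have "i \<notin> B" using B by auto
      ultimately have "card \<tau> = \<beta>" using B assms by auto
      thus "\<tau> \<in> {\<tau>\<in>subsets_of m \<beta>. i \<in> \<tau>}" using B assms by (auto simp: subsets_of_def)
    qed
  qed
  have inj: "inj_on (insert i) ?B"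
  proof (rule inj_onI)
    fix X Y assume "X \<in> ?B" "Y \<in> ?B" "insert i X = insert i Y"
    hence "i \<notin> X" "i \<notin> Y" "insert i X = insert i Y" by auto
    thus "X = Y" by (metis Diff_insert_absorb)
  qed
  have "card ?B = card ({..<m} - {i}) choose (\<beta> - 1)" by (rule n_subsets) simp
  also have "card ({..<m} - {i}) = m - 1" using assms by simp
  finally show ?thesis unfolding eq card_image[OF inj] .
qed

lemma sum_over_subsets:
  fixes g :: "nat \<Rightarrow> real"
  assumes "1 \<le> \<beta>"
  shows "(\<Sum>\<tau>\<in>subsets_of m \<beta>. \<Sum>i\<in>\<tau>. g i) = real ((m - 1) choose (\<beta> - 1)) * (\<Sum>i<m. g i)"
proof -
  have "(\<Sum>\<tau>\<in>subsets_of m \<beta>. \<Sum>i\<in>\<tau>. g i) = (\<Sum>\<tau>\<in>subsets_of m \<beta>. \<Sum>i<m. if i \<in> \<tau> then g i else 0)"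
  proof (rule sum.cong[OF refl])
    fix \<tau> assume "\<tau> \<in> subsets_of m \<beta>"
    hence "\<tau> \<subseteq> {..<m}" using subsets_elem by blast
    thus "(\<Sum>i\<in>\<tau>. g i) = (\<Sum>i<m. if i \<in> \<tau> then g i else 0)"
    proof -
      have "(\<Sum>i<m. if i \<in> \<tau> then g i else 0) = (\<Sum>i\<in>{i\<in>{..<m}. i \<in> \<tau>}. g i)"
        by (rule sum.inter_filter[symmetric]) simp
      also have "{i\<in>{..<m}. i \<in> \<tau>} = \<tau>" using \<open>\<tau> \<subseteq> {..<m}\<close> by blast
      finally show ?thesis by simp
    qed
  qed
  also have "\<dots> = (\<Sum>i<m. \<Sum>\<tau>\<in>subsets_of m \<beta>. if i \<in> \<tau> then g i else 0)" by (rule sum.swap)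
  also have "\<dots> = (\<Sum>i<m. real ((m - 1) choose (\<beta> - 1)) * g i)"
  proof (rule sum.cong[OF refl])
    fix i assume "i \<in> {..<m}"
    hence "card {\<tau>\<in>subsets_of m \<beta>. i \<in> \<tau>} = (m - 1) choose (\<beta> - 1)" using count_containing assms by auto
    moreover have "(\<Sum>\<tau>\<in>subsets_of m \<beta>. if i \<in> \<tau> then g i else 0) = real (card {\<tau>\<in>subsets_of m \<beta>. i \<in> \<tau>}) * g i"
      using sum.inter_filter[OF subsets_fin[of m \<beta>], of "\<lambda>_. g i" "\<lambda>\<tau>. i \<in> \<tau>"] by simp
    ultimately show "(\<Sum>\<tau>\<in>subsets_of m \<beta>. if i \<in> \<tau> then g i else 0) = real ((m - 1) choose (\<beta> - 1)) * g i" by simp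
  qed
  finally show ?thesis by (simp add: sum_distrib_left)
qed

lemma choose_ratio:
  assumes "1 \<le> \<beta>" "\<beta> \<le> m"
  shows "real ((m - 1) choose (\<beta> - 1)) / real (m choose \<beta>) = real \<beta> / real m"
proof -
  define n where "n = m - 1"
  define k where "k = \<beta> - 1"
  have nk: "m = Suc n" "\<beta> = Suc k" using assms unfolding n_def k_def by auto
  have "Suc n * (n choose k) = (Suc n choose Suc k) * Suc k" by (rule Suc_times_binomial_eq)
  hence e: "real (Suc n) * real (n choose k) = real (Suc n choose Suc k) * real (Suc k)" by (metis of_nat_mult)
  have "(Suc n choose Suc k) > 0" using assms nk zero_less_binomial_iff by simp
  hence pos: "real (Suc n choose Suc k) > 0" by (metis of_nat_0_less_iff)
  have "real (n choose k) / real (Suc n choose Suc k) = real (Suc k) / real (Suc n)"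
    using e pos by (simp add: field_simps del: binomial_Suc_Suc)
  thus ?thesis using nk by simp
qed

lemma fobj_eq:
  assumes "\<beta> \<le> m"
  shows "fobj m \<beta> a b y = (\<Sum>\<tau>\<in>subsets_of m \<beta>. (1/2) * (resid a b y (pick a b y \<tau>))\<^sup>2) / real (card (subsets_of m \<beta>))"
  unfolding fobj_def by (rule integral_pmf_of_set[OF subsets_ne[OF assms] subsets_fin])

lemma fobj_lower:
  assumes b: "1 \<le> \<beta>" "\<beta> \<le> m"
  shows "(1 / real m) * (\<Sum>i<m. (resid a b y i)\<^sup>2) \<le> 2 * fobj m \<beta> a b y"
proof -
  let ?U = "subsets_of m \<beta>"
  let ?r = "\<lambda>\<tau>. resid a b y (pick a b y \<tau>)"
  have Npos: "real (card ?U) > 0" using subsets_card[of m \<beta>] b zero_less_binomial_iff by simp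
  have each: "(\<Sum>i\<in>\<tau>. (resid a b y i)\<^sup>2) \<le> real \<beta> * (?r \<tau>)\<^sup>2" if t: "\<tau> \<in> ?U" for \<tau>
  proof -
    have f: "finite \<tau>" "card \<tau> = \<beta>" using subsets_elem[OF t] by auto
    hence ne: "\<tau> \<noteq> {}" using b by auto
    have "(\<Sum>i\<in>\<tau>. (resid a b y i)\<^sup>2) \<le> (\<Sum>i\<in>\<tau>. (?r \<tau>)\<^sup>2)"
      using pick_props[OF f(1) ne, of a b y] by (intro sum_mono power_mono) (auto simp: resid_nonneg)
    thus ?thesis using f by simp
  qed
  have "real ((m - 1) choose (\<beta> - 1)) * (\<Sum>i<m. (resid a b y i)\<^sup>2) = (\<Sum>\<tau>\<in>?U. \<Sum>i\<in>\<tau>. (resid a b y i)\<^sup>2)"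
    using sum_over_subsets[OF b(1)] by simp
  also have "\<dots> \<le> (\<Sum>\<tau>\<in>?U. real \<beta> * (?r \<tau>)\<^sup>2)" by (rule sum_mono) (rule each)
  also have "\<dots> = real \<beta> * (2 * (\<Sum>\<tau>\<in>?U. (1/2) * (?r \<tau>)\<^sup>2))" by (simp add: sum_distrib_left)
  finally have ineq: "real ((m - 1) choose (\<beta> - 1)) * (\<Sum>i<m. (resid a b y i)\<^sup>2) \<le> real \<beta> * (2 * (\<Sum>\<tau>\<in>?U. (1/2) * (?r \<tau>)\<^sup>2))" .
  have ratio: "real ((m - 1) choose (\<beta> - 1)) / real (card ?U) = real \<beta> / real m"
    using choose_ratio[OF b] subsets_card[of m \<beta>] by simp
  have bpos: "real \<beta> > 0" using b by simp
  have mpos: "real m > 0" using b by simp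
  have "(1 / real m) * (\<Sum>i<m. (resid a b y i)\<^sup>2) = (real ((m - 1) choose (\<beta> - 1)) / real (card ?U)) / real \<beta> * (\<Sum>i<m. (resid a b y i)\<^sup>2)"
    using ratio bpos by simp
  also have "\<dots> = (real ((m - 1) choose (\<beta> - 1)) * (\<Sum>i<m. (resid a b y i)\<^sup>2)) / (real \<beta> * real (card ?U))"
    by (simp add: field_simps)
  also have "\<dots> \<le> (real \<beta> * (2 * (\<Sum>\<tau>\<in>?U. (1/2) * (?r \<tau>)\<^sup>2))) / (real \<beta> * real (card ?U))"
    using ineq Npos bpos by (intro divide_right_mono) auto
  also have "\<dots> = 2 * fobj m \<beta> a b y" using bpos Npos fobj_eq[OF b(2), of a b y] by simp
  finally show ?thesis .
qed

lemma fobj_upper: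
  assumes b: "1 \<le> \<beta>" "\<beta> \<le> m"
  shows "2 * fobj m \<beta> a b y \<le> real \<beta> / real m * (\<Sum>i<m. (resid a b y i)\<^sup>2)"
proof -
  let ?U = "subsets_of m \<beta>"
  let ?r = "\<lambda>\<tau>. resid a b y (pick a b y \<tau>)"
  have Npos: "real (card ?U) > 0" using subsets_card[of m \<beta>] b zero_less_binomial_iff by simp
  have each: "(?r \<tau>)\<^sup>2 \<le> (\<Sum>i\<in>\<tau>. (resid a b y i)\<^sup>2)" if t: "\<tau> \<in> ?U" for \<tau>
  proof -
    have f: "finite \<tau>" "card \<tau> = \<beta>" using subsets_elem[OF t] by auto
    hence ne: "\<tau> \<noteq> {}" using b by auto
    show ?thesis using pick_props[OF f(1) ne, of a b y] f(1)
      by (intro member_le_sum[where f="\<lambda>i. (resid a b y i)\<^sup>2"]) auto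
  qed
  have "2 * (\<Sum>\<tau>\<in>?U. (1/2) * (?r \<tau>)\<^sup>2) = (\<Sum>\<tau>\<in>?U. (?r \<tau>)\<^sup>2)" by (simp add: sum_distrib_left)
  also have "\<dots> \<le> (\<Sum>\<tau>\<in>?U. \<Sum>i\<in>\<tau>. (resid a b y i)\<^sup>2)" by (rule sum_mono) (rule each)
  also have "\<dots> = real ((m - 1) choose (\<beta> - 1)) * (\<Sum>i<m. (resid a b y i)\<^sup>2)"
    using sum_over_subsets[OF b(1)] by simp
  finally have ineq: "2 * (\<Sum>\<tau>\<in>?U. (1/2) * (?r \<tau>)\<^sup>2) \<le> real ((m - 1) choose (\<beta> - 1)) * (\<Sum>i<m. (resid a b y i)\<^sup>2)" .
  have ratio: "real ((m - 1) choose (\<beta> - 1)) / real (card ?U) = real \<beta> / real m"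
    using choose_ratio[OF b] subsets_card[of m \<beta>] by simp
  have "2 * fobj m \<beta> a b y = 2 * (\<Sum>\<tau>\<in>?U. (1/2) * (?r \<tau>)\<^sup>2) / real (card ?U)"
    using fobj_eq[OF b(2), of a b y] by simp
  also have "\<dots> \<le> real ((m - 1) choose (\<beta> - 1)) * (\<Sum>i<m. (resid a b y i)\<^sup>2) / real (card ?U)"
    using ineq Npos by (intro divide_right_mono) auto
  also have "\<dots> = (real ((m - 1) choose (\<beta> - 1)) / real (card ?U)) * (\<Sum>i<m. (resid a b y i)\<^sup>2)"
    by simp
  also have "\<dots> = real \<beta> / real m * (\<Sum>i<m. (resid a b y i)\<^sup>2)"
    unfolding ratio ..
  finally show ?thesis .
qed

lemma fobj_le_sq:
  assumes b: "1 \<le> \<beta>" "\<beta> \<le> m" and r: "\<forall>\<tau>\<in>subsets_of m \<beta>. (resid a b y (pick a b y \<tau>))\<^sup>2 \<le> D"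
  shows "2 * fobj m \<beta> a b y \<le> D"
proof -
  let ?U = "subsets_of m \<beta>"
  have Npos: "real (card ?U) > 0" using subsets_card[of m \<beta>] b zero_less_binomial_iff by simp
  have "2 * fobj m \<beta> a b y = (\<Sum>\<tau>\<in>?U. (resid a b y (pick a b y \<tau>))\<^sup>2) / real (card ?U)"
    using fobj_eq[OF b(2), of a b y] by (simp add: sum_distrib_left)
  also have "\<dots> \<le> (\<Sum>\<tau>\<in>?U. D) / real (card ?U)"
    using r Npos by (intro divide_right_mono sum_mono) auto
  also have "\<dots> = D" using Npos by simp
  finally show ?thesis .
qed

lemma fobj_nonneg:
  assumes b: "\<beta> \<le> m"
  shows "0 \<le> fobj m \<beta> a b y"
  using fobj_eq[OF b, of a b y] by (auto intro!: divide_nonneg_nonneg sum_nonneg)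

lemma AtA_mult:
  fixes a :: "nat \<Rightarrow> real^'n"
  shows "AtA m a *v v = (\<Sum>l<m. (a l \<bullet> v) *\<^sub>R a l)"
proof (subst vec_eq_iff, intro allI)
  fix i
  have "(AtA m a *v v) $ i = (\<Sum>j\<in>UNIV. (\<Sum>l<m. a l $ i * a l $ j) * v $ j)"
    by (simp add: AtA_def matrix_vector_mult_def)
  also have "\<dots> = (\<Sum>j\<in>UNIV. \<Sum>l<m. a l $ i * (a l $ j * v $ j))"
    by (simp add: sum_distrib_right mult.assoc)
  also have "\<dots> = (\<Sum>l<m. \<Sum>j\<in>UNIV. a l $ i * (a l $ j * v $ j))" by (rule sum.swap)
  also have "\<dots> = (\<Sum>l<m. (a l \<bullet> v) * a l $ i)"
    by (simp add: inner_vec_def sum_distrib_left sum_distrib_right mult.commute)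
  finally show "(AtA m a *v v) $ i = (\<Sum>l<m. (a l \<bullet> v) *\<^sub>R a l) $ i" by simp
qed

definition qf :: "nat \<Rightarrow> (nat \<Rightarrow> real^'n) \<Rightarrow> real^'n \<Rightarrow> real" where
  "qf m a v = (\<Sum>l<m. (a l \<bullet> v)\<^sup>2)"

lemma inner_AtA:
  fixes a :: "nat \<Rightarrow> real^'n"
  shows "w \<bullet> (AtA m a *v v) = (\<Sum>l<m. (a l \<bullet> v) * (a l \<bullet> w))"
  unfolding AtA_mult by (simp add: inner_sum_right inner_commute)

lemma qf_nonneg: "qf m a v \<ge> 0" unfolding qf_def by (auto intro: sum_nonneg)

lemma qf_scale: "qf m a (c *\<^sub>R v) = c\<^sup>2 * qf m a v"
  unfolding qf_def by (simp add: sum_distrib_left power_mult_distrib)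

lemma qf_add:
  fixes a :: "nat \<Rightarrow> real^'n"
  shows "qf m a (v + t *\<^sub>R w) = qf m a v + 2 * t * (w \<bullet> (AtA m a *v v)) + t\<^sup>2 * qf m a w"
  unfolding qf_def inner_AtA
  by (simp add: inner_add_right power2_eq_square sum.distrib sum_distrib_left algebra_simps)

lemma quad_nonneg_lin0:
  fixes c e :: real
  assumes "\<And>t. 0 \<le> 2 * t * c + t\<^sup>2 * e" "e \<ge> 0"
  shows "c = 0"
proof (rule ccontr)
  assume c: "c \<noteq> 0"
  let ?t = "- c / (e + 1)"
  have "0 \<le> 2 * ?t * c + ?t\<^sup>2 * e" by (rule assms(1))
  hence "0 \<le> (2 * ?t * c + ?t\<^sup>2 * e) * (e + 1)\<^sup>2" using assms(2) by simp
  also have "(2 * ?t * c + ?t\<^sup>2 * e) * (e + 1)\<^sup>2 = - c\<^sup>2 * (e + 2)"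
  proof -
    have ne: "e + 1 \<noteq> 0" using assms(2) by simp
    have ts: "?t * (e + 1) = - c" using ne by simp
    have "(2 * ?t * c + ?t\<^sup>2 * e) * (e + 1)\<^sup>2 = 2 * c * (?t * (e + 1)) * (e + 1) + e * (?t * (e + 1))\<^sup>2"
      by (simp add: power2_eq_square algebra_simps)
    also have "\<dots> = -2 * c * c * (e + 1) + c * c * e" unfolding ts by (simp add: power2_eq_square)
    finally have "(2 * ?t * c + ?t\<^sup>2 * e) * (e + 1)\<^sup>2 = -2 * c * c * (e + 1) + c * c * e" .
    thus ?thesis by (simp add: power2_eq_square algebra_simps)
  qed
  finally have "c\<^sup>2 * (e + 2) \<le> 0" by simp
  moreover have "c\<^sup>2 * (e + 2) > 0" using c assms(2) by simp
  ultimately show False by simp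
qed

lemma lambda_max_bound:
  fixes a :: "nat \<Rightarrow> real^'n"
  shows "lambda_max (AtA m a) \<ge> 0 \<and> (\<forall>v. qf m a v \<le> lambda_max (AtA m a) * (norm v)\<^sup>2)"
proof -
  let ?M = "AtA m a"
  have cont: "continuous_on (sphere 0 1) (qf m a)"
    unfolding qf_def by (intro continuous_intros)
  obtain u :: "real^'n" where u: "norm u = 1" using vector_choose_size[of 1] by auto
  have "sphere (0::real^'n) 1 \<noteq> {}" using u by auto
  then obtain v where v: "v \<in> sphere 0 1" "\<And>y. y \<in> sphere 0 1 \<Longrightarrow> qf m a y \<le> qf m a v"
    using continuous_attains_sup[OF compact_sphere _ cont] by blast
  define lam where "lam = qf m a v"
  have nv: "norm v = 1" using v(1) by simp
  have bound: "qf m a w \<le> lam * (norm w)\<^sup>2" for w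
  proof (cases "w = 0")
    case True thus ?thesis by (simp add: qf_def)
  next
    case False
    let ?w = "(1 / norm w) *\<^sub>R w"
    have "?w \<in> sphere 0 1" using False by simp
    hence "qf m a ?w \<le> lam" using v(2) lam_def by blast
    hence "(1 / norm w)\<^sup>2 * qf m a w \<le> lam" by (simp add: qf_scale)
    hence "(1 / norm w)\<^sup>2 * qf m a w * (norm w)\<^sup>2 \<le> lam * (norm w)\<^sup>2"
      by (simp add: mult_right_mono)
    thus ?thesis using False by (simp add: field_simps)
  qed
  have lin0: "lam * (v \<bullet> w) - w \<bullet> (?M *v v) = 0" for w
  proof (rule quad_nonneg_lin0)
    fix t :: real
    have "qf m a (v + t *\<^sub>R w) \<le> lam * (norm (v + t *\<^sub>R w))\<^sup>2" by (rule bound)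
    moreover have "(norm (v + t *\<^sub>R w))\<^sup>2 = 1 + 2 * t * (v \<bullet> w) + t\<^sup>2 * (norm w)\<^sup>2"
    proof -
      have vv: "v \<bullet> v = 1" using nv by (metis power2_norm_eq_inner power_one)
      have ww: "w \<bullet> w = (norm w)\<^sup>2" by (simp add: power2_norm_eq_inner)
      have "(norm (v + t *\<^sub>R w))\<^sup>2 = (v + t *\<^sub>R w) \<bullet> (v + t *\<^sub>R w)" by (rule power2_norm_eq_inner)
      also have "\<dots> = v \<bullet> v + 2 * t * (v \<bullet> w) + t\<^sup>2 * (w \<bullet> w)"
        by (simp add: inner_add_left inner_add_right inner_commute power2_eq_square algebra_simps)
      finally show ?thesis unfolding vv ww .
    qed
    ultimately show "0 \<le> 2 * t * (lam * (v \<bullet> w) - w \<bullet> (?M *v v)) + t\<^sup>2 * (lam * (norm w)\<^sup>2 - qf m a w)"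
      unfolding qf_add lam_def by (simp add: algebra_simps)
  next
    show "0 \<le> lam * (norm w)\<^sup>2 - qf m a w" using bound[of w] by simp
  qed
  have eig: "?M *v v = lam *\<^sub>R v"
  proof -
    let ?w = "lam *\<^sub>R v - ?M *v v"
    have "?w \<bullet> ?w = lam * (v \<bullet> ?w) - ?w \<bullet> (?M *v v)"
      by (simp add: inner_diff_left inner_commute)
    also have "\<dots> = 0" by (rule lin0)
    finally show ?thesis by simp
  qed
  have v0: "v \<noteq> 0" using nv by auto
  have laminS: "is_eigenvalue ?M lam" unfolding is_eigenvalue_def using eig v0 by blast
  let ?S = "{c. is_eigenvalue ?M c}"
  define ev where "ev c = (SOME v. v \<noteq> 0 \<and> ?M *v v = c *\<^sub>R v)" for c
  have evp: "ev c \<noteq> 0 \<and> ?M *v ev c = c *\<^sub>R ev c" if "c \<in> ?S" for c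
  proof -
    have "\<exists>v. v \<noteq> 0 \<and> ?M *v v = c *\<^sub>R v" using that unfolding is_eigenvalue_def by simp
    thus ?thesis unfolding ev_def by (rule someI_ex)
  qed
  have sym: "x \<bullet> (?M *v y) = y \<bullet> (?M *v x)" for x y
    unfolding inner_AtA by (simp add: mult.commute)
  have orth: "ev c1 \<bullet> ev c2 = 0" if "c1 \<in> ?S" "c2 \<in> ?S" "c1 \<noteq> c2" for c1 c2
  proof -
    have "c2 * (ev c1 \<bullet> ev c2) = ev c1 \<bullet> (?M *v ev c2)" using evp[OF that(2)] by simp
    also have "\<dots> = ev c2 \<bullet> (?M *v ev c1)" by (rule sym)
    also have "\<dots> = c1 * (ev c1 \<bullet> ev c2)" using evp[OF that(1)] by (simp add: inner_commute)
    finally have "(c2 - c1) * (ev c1 \<bullet> ev c2) = 0" by (simp add: algebra_simps)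
    thus ?thesis using that(3) by simp
  qed
  have inj: "inj_on ev ?S"
  proof (rule inj_onI)
    fix c1 c2 assume h: "c1 \<in> ?S" "c2 \<in> ?S" "ev c1 = ev c2"
    show "c1 = c2"
    proof (rule ccontr)
      assume "c1 \<noteq> c2"
      hence "ev c1 \<bullet> ev c1 = 0" using orth[OF h(1,2)] h(3) by simp
      thus False using evp[OF h(1)] by simp
    qed
  qed
  have "pairwise orthogonal (ev ` ?S)"
    unfolding pairwise_def orthogonal_def
  proof (intro ballI impI)
    fix x y assume "x \<in> ev ` ?S" "y \<in> ev ` ?S" "x \<noteq> y"
    then obtain c1 c2 where "c1 \<in> ?S" "c2 \<in> ?S" "x = ev c1" "y = ev c2" "c1 \<noteq> c2" by blast
    thus "x \<bullet> y = 0" using orth by blast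
  qed
  moreover have "0 \<notin> ev ` ?S" using evp by auto
  ultimately have "independent (ev ` ?S)" by (rule pairwise_orthogonal_independent)
  hence "finite (ev ` ?S)" using independent_bound by blast
  hence finS: "finite ?S" using finite_imageD[OF _ inj] by blast
  have "lam \<le> lambda_max ?M" unfolding lambda_max_def using finS laminS by (intro Max_ge) auto
  moreover have "lam \<ge> 0" unfolding lam_def by (rule qf_nonneg)
  ultimately show ?thesis
  proof (intro conjI allI)
    fix w :: "real^'n"
    have "lam * (norm w)\<^sup>2 \<le> lambda_max ?M * (norm w)\<^sup>2"
      using \<open>lam \<le> lambda_max ?M\<close> by (rule mult_right_mono) simp
    thus "qf m a w \<le> lambda_max ?M * (norm w)\<^sup>2" using bound[of w] by linarith
  qed simp
qed

lemma seqs_0: "sample_seqs m \<beta> 0 = {[]}"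
  by (auto simp: sample_seqs_def)

lemma seqs_Suc: "sample_seqs m \<beta> (Suc N) = (\<lambda>(ts, t). ts @ [t]) ` (sample_seqs m \<beta> N \<times> subsets_of m \<beta>)"
proof
  show "sample_seqs m \<beta> (Suc N) \<subseteq> (\<lambda>(ts, t). ts @ [t]) ` (sample_seqs m \<beta> N \<times> subsets_of m \<beta>)"
  proof
    fix xs assume "xs \<in> sample_seqs m \<beta> (Suc N)"
    hence h: "length xs = Suc N" "set xs \<subseteq> subsets_of m \<beta>" by (auto simp: sample_seqs_def)
    then obtain ys y where "xs = ys @ [y]" "length ys = N" by (metis length_Suc_conv_rev)
    thus "xs \<in> (\<lambda>(ts, t). ts @ [t]) ` (sample_seqs m \<beta> N \<times> subsets_of m \<beta>)"
      using h by (force simp: sample_seqs_def)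
  qed
qed (auto simp: sample_seqs_def)

lemma seqs_inj: "inj_on (\<lambda>(ts, t). ts @ [t]) A"
  by (rule inj_onI) auto

lemma seqs_fin_card: "finite (sample_seqs m \<beta> N) \<and> card (sample_seqs m \<beta> N) = card (subsets_of m \<beta>) ^ N"
proof (induction N)
  case 0 thus ?case by (simp add: seqs_0)
next
  case (Suc N)
  thus ?case unfolding seqs_Suc using subsets_fin[of m \<beta>]
    by (simp add: card_image[OF seqs_inj] card_cartesian_product)
qed

lemma seqs_ne: "\<beta> \<le> m \<Longrightarrow> sample_seqs m \<beta> N \<noteq> {}"
  using seqs_fin_card[of m \<beta> N] subsets_fin[of m \<beta>] subsets_ne[of \<beta> m]
  by (metis card_0_eq card_gt_0_iff power_not_zero)

lemma Exp_eq: "\<beta> \<le> m \<Longrightarrow> Exp m \<beta> N g = (\<Sum>ts\<in>sample_seqs m \<beta> N. g ts) / real (card (sample_seqs m \<beta> N))"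
  unfolding Exp_def using seqs_fin_card[of m \<beta> N] seqs_ne[of \<beta> m N]
  by (intro integral_pmf_of_set) auto

lemma Exp_Suc:
  assumes "\<beta> \<le> m"
  shows "Exp m \<beta> (Suc N) g = Exp m \<beta> N (\<lambda>ts. (\<Sum>t\<in>subsets_of m \<beta>. g (ts @ [t])) / real (card (subsets_of m \<beta>)))"
proof -
  let ?U = "subsets_of m \<beta>" and ?S = "sample_seqs m \<beta> N"
  have fin: "finite ?S" "finite ?U" using seqs_fin_card subsets_fin by auto
  have "(\<Sum>ts\<in>sample_seqs m \<beta> (Suc N). g ts) = (\<Sum>p\<in>?S \<times> ?U. g ((\<lambda>(ts, t). ts @ [t]) p))"
    unfolding seqs_Suc by (subst sum.reindex[OF seqs_inj]) (simp add: comp_def)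
  also have "\<dots> = (\<Sum>ts\<in>?S. \<Sum>t\<in>?U. g (ts @ [t]))"
    by (simp add: sum.cartesian_product case_prod_beta)
  finally have s: "(\<Sum>ts\<in>sample_seqs m \<beta> (Suc N). g ts) = (\<Sum>ts\<in>?S. \<Sum>t\<in>?U. g (ts @ [t]))" .
  have c: "card (sample_seqs m \<beta> (Suc N)) = card ?S * card ?U"
    using seqs_fin_card[of m \<beta>] by simp
  show ?thesis unfolding Exp_eq[OF assms] s c
    by (simp add: sum_divide_distrib[symmetric] field_simps)
qed

lemma Exp_mono:
  assumes "\<beta> \<le> m" "\<And>ts. ts \<in> sample_seqs m \<beta> N \<Longrightarrow> g ts \<le> h ts"
  shows "Exp m \<beta> N g \<le> Exp m \<beta> N h"
  unfolding Exp_eq[OF assms(1)] by (intro divide_right_mono sum_mono assms(2)) auto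

lemma Exp_lin:
  assumes "\<beta> \<le> m"
  shows "Exp m \<beta> N (\<lambda>ts. c * g ts + d * h ts) = c * Exp m \<beta> N g + d * Exp m \<beta> N h"
  unfolding Exp_eq[OF assms] by (simp add: sum.distrib sum_distrib_left add_divide_distrib)

lemma Exp_cmult:
  assumes "\<beta> \<le> m"
  shows "Exp m \<beta> N (\<lambda>ts. c * g ts) = c * Exp m \<beta> N g"
  unfolding Exp_eq[OF assms] by (simp add: sum_distrib_left)

lemma Exp_const:
  assumes "\<beta> \<le> m"
  shows "Exp m \<beta> N (\<lambda>ts. c) = c"
proof -
  have "card (sample_seqs m \<beta> N) > 0" using seqs_fin_card[of m \<beta> N] seqs_ne[OF assms, of N] card_gt_0_iff by blast
  thus ?thesis unfolding Exp_eq[OF assms] by simp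
qed

lemma Exp_sum:
  assumes "\<beta> \<le> m"
  shows "Exp m \<beta> N (\<lambda>ts. \<Sum>l\<in>L. g l ts) = (\<Sum>l\<in>L. Exp m \<beta> N (g l))"
  unfolding Exp_eq[OF assms] by (simp add: sum.swap[of _ L] sum_divide_distrib)

lemma Exp_marg:
  assumes bm: "\<beta> \<le> m" and dep: "\<And>ts t. M \<le> length ts \<Longrightarrow> g (ts @ [t]) = g ts"
  shows "M \<le> N \<Longrightarrow> Exp m \<beta> N g = Exp m \<beta> M g"
proof (induction N)
  case 0 thus ?case by simp
next
  case (Suc N)
  show ?case
  proof (cases "M = Suc N")
    case True thus ?thesis by simp
  next
    case False
    hence MN: "M \<le> N" using Suc.prems by simp
    have "Exp m \<beta> (Suc N) g = Exp m \<beta> N (\<lambda>ts. (\<Sum>t\<in>subsets_of m \<beta>. g (ts @ [t])) / real (card (subsets_of m \<beta>)))"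
      by (rule Exp_Suc[OF bm])
    also have "\<dots> = Exp m \<beta> N g"
      unfolding Exp_eq[OF bm]
    proof (intro arg_cong2[where f="(/)"] sum.cong refl)
      fix ts assume "ts \<in> sample_seqs m \<beta> N"
      hence "length ts = N" by (simp add: sample_seqs_def)
      hence "\<And>t. g (ts @ [t]) = g ts" using dep MN by simp
      moreover have "real (card (subsets_of m \<beta>)) > 0"
        using subsets_fin subsets_ne[OF bm] card_gt_0_iff by (metis of_nat_0_less_iff)
      ultimately show "(\<Sum>t\<in>subsets_of m \<beta>. g (ts @ [t])) / real (card (subsets_of m \<beta>)) = g ts"
        by simp
    qed
    finally show ?thesis using Suc.IH MN by simp
  qed
qed

lemma Y_prefix:
  "(\<forall>i<n. ts ! i = ts' ! i) \<Longrightarrow> gskm_Y a b \<delta> \<xi> x0 ts n = gskm_Y a b \<delta> \<xi> x0 ts' n"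
proof (induction n)
  case 0 thus ?case by simp
next
  case (Suc n)
  hence "gskm_Y a b \<delta> \<xi> x0 ts n = gskm_Y a b \<delta> \<xi> x0 ts' n" "ts ! n = ts' ! n" by auto
  thus ?case by (simp add: Let_def)
qed

lemma x_append:
  assumes "k \<le> length ts + 1"
  shows "gskm_x a b \<delta> \<xi> x0 (ts @ [t]) k = gskm_x a b \<delta> \<xi> x0 ts k"
proof -
  have "\<forall>i<k - 1. (ts @ [t]) ! i = ts ! i" using assms by (auto simp: nth_append)
  thus ?thesis unfolding gskm_x_def using Y_prefix[of "k - 1" "ts @ [t]" ts a b \<delta> \<xi> x0] by simp
qed

lemma x_0: "gskm_x a b \<delta> \<xi> x0 ts 0 = x0" by (simp add: gskm_x_def)
lemma x_1: "gskm_x a b \<delta> \<xi> x0 ts 1 = x0" by (simp add: gskm_x_def)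

lemma x_2: "gskm_x a b \<delta> \<xi> x0 ts 2 = skm_step a b \<delta> (ts ! 0) x0"
proof -
  have "gskm_x a b \<delta> \<xi> x0 ts 2 = fst (gskm_Y a b \<delta> \<xi> x0 ts (Suc 0))" by (simp add: gskm_x_def)
  also have "\<dots> = (1 - \<xi>) *\<^sub>R skm_step a b \<delta> (ts ! 0) x0 + \<xi> *\<^sub>R skm_step a b \<delta> (ts ! 0) x0"
    by (simp add: Let_def)
  also have "\<dots> = skm_step a b \<delta> (ts ! 0) x0" by (simp add: scaleR_left_distrib[symmetric])
  finally show ?thesis .
qed

lemma x_rec:
  assumes "1 \<le> n"
  shows "gskm_x a b \<delta> \<xi> x0 ts (n + 2) =
    (1 - \<xi>) *\<^sub>R skm_step a b \<delta> (ts ! n) (gskm_x a b \<delta> \<xi> x0 ts (n + 1))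
    + \<xi> *\<^sub>R skm_step a b \<delta> (ts ! (n - 1)) (gskm_x a b \<delta> \<xi> x0 ts n)"
proof -
  obtain j where j: "n = Suc j" using assms by (cases n) auto
  have "gskm_x a b \<delta> \<xi> x0 ts (n + 2) = fst (gskm_Y a b \<delta> \<xi> x0 ts (Suc n))" by (simp add: gskm_x_def)
  also have "\<dots> = (1 - \<xi>) *\<^sub>R skm_step a b \<delta> (ts ! n) (fst (gskm_Y a b \<delta> \<xi> x0 ts n))
       + \<xi> *\<^sub>R snd (gskm_Y a b \<delta> \<xi> x0 ts n)"
    using assms by (simp add: Let_def)
  also have "snd (gskm_Y a b \<delta> \<xi> x0 ts n) = skm_step a b \<delta> (ts ! j) (fst (gskm_Y a b \<delta> \<xi> x0 ts j))"
    unfolding j by (simp add: Let_def)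
  also have "fst (gskm_Y a b \<delta> \<xi> x0 ts n) = gskm_x a b \<delta> \<xi> x0 ts (n + 1)" by (simp add: gskm_x_def)
  also have "fst (gskm_Y a b \<delta> \<xi> x0 ts j) = gskm_x a b \<delta> \<xi> x0 ts n" using j by (simp add: gskm_x_def)
  finally show ?thesis using j by simp
qed

lemma pickres_convex:
  fixes a :: "nat \<Rightarrow> real^'n"
  assumes "finite \<tau>" "\<tau> \<noteq> {}"
  shows "convex_on UNIV (\<lambda>x. resid a b x (pick a b x \<tau>))"
proof (rule convex_onI)
  fix t :: real and x y :: "real^'n" assume t: "0 < t" "t < 1"
  let ?z = "(1 - t) *\<^sub>R x + t *\<^sub>R y"
  let ?i = "pick a b ?z \<tau>"
  have i: "?i \<in> \<tau>" using pick_props[OF assms] by blast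
  have "resid a b ?z ?i \<le> (1 - t) * resid a b x ?i + t * resid a b y ?i"
    using convex_onD[OF resid_convex_on[of a b ?i], of t x y] t by simp
  also have "\<dots> \<le> (1 - t) * resid a b x (pick a b x \<tau>) + t * resid a b y (pick a b y \<tau>)"
    using pick_props[OF assms, of a b x] pick_props[OF assms, of a b y] i t
    by (intro add_mono mult_left_mono) auto
  finally show "resid a b ?z ?i \<le> (1 - t) * resid a b x (pick a b x \<tau>) + t * resid a b y (pick a b y \<tau>)" .
qed simp

lemma fobj_convex:
  fixes a :: "nat \<Rightarrow> real^'n"
  assumes b: "1 \<le> \<beta>" "\<beta> \<le> m"
  shows "convex_on UNIV (fobj m \<beta> a b)"
proof (rule convex_onI)
  fix t :: real and x y :: "real^'n" assume t: "0 < t" "t < 1"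
  let ?U = "subsets_of m \<beta>"
  let ?z = "(1 - t) *\<^sub>R x + t *\<^sub>R y"
  let ?g = "\<lambda>\<tau> x. (resid a b x (pick a b x \<tau>))\<^sup>2"
  have Npos: "real (card ?U) > 0" using subsets_card[of m \<beta>] b zero_less_binomial_iff by simp
  have each: "?g \<tau> ?z \<le> (1 - t) * ?g \<tau> x + t * ?g \<tau> y" if "\<tau> \<in> ?U" for \<tau>
  proof -
    have "finite \<tau>" "\<tau> \<noteq> {}" using subsets_elem[OF that] b by auto
    from convex_sq[OF pickres_convex[OF this, of a b]] have "convex_on UNIV (?g \<tau>)" by (simp add: resid_nonneg)
    from convex_onD[OF this, of t x y] t show ?thesis by simp
  qed
  have "fobj m \<beta> a b ?z = (\<Sum>\<tau>\<in>?U. (1/2) * ?g \<tau> ?z) / real (card ?U)" by (rule fobj_eq[OF b(2)])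
  also have "\<dots> \<le> (\<Sum>\<tau>\<in>?U. (1 - t) * ((1/2) * ?g \<tau> x) + t * ((1/2) * ?g \<tau> y)) / real (card ?U)"
  proof (intro divide_right_mono sum_mono)
    fix \<tau> assume "\<tau> \<in> ?U"
    from each[OF this] show "(1/2) * ?g \<tau> ?z \<le> (1 - t) * ((1/2) * ?g \<tau> x) + t * ((1/2) * ?g \<tau> y)" by linarith
  qed (use Npos in simp)
  also have "\<dots> = (1 - t) * fobj m \<beta> a b x + t * fobj m \<beta> a b y"
    unfolding fobj_eq[OF b(2), of a b x] fobj_eq[OF b(2), of a b y]
    by (simp add: sum.distrib sum_distrib_left add_divide_distrib)
  finally show "fobj m \<beta> a b ?z \<le> (1 - t) * fobj m \<beta> a b x + t * fobj m \<beta> a b y" .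
qed simp

lemma avg_step:
  fixes a :: "nat \<Rightarrow> real^'n"
  assumes ne: "feas m a b \<noteq> {}" and rows: "\<forall>i<m. norm (a i) = 1"
    and b: "1 \<le> \<beta>" "\<beta> \<le> m" and dpos: "0 < \<delta>"
  shows "(\<Sum>t\<in>subsets_of m \<beta>. (infdist (skm_step a b \<delta> t y) (feas m a b))\<^sup>2) / real (card (subsets_of m \<beta>))
    \<le> (infdist y (feas m a b))\<^sup>2 - (2 * \<delta> - \<delta>\<^sup>2) * (2 * fobj m \<beta> a b y)"
proof -
  let ?U = "subsets_of m \<beta>"
  let ?d = "(infdist y (feas m a b))\<^sup>2"
  let ?e = "2 * \<delta> - \<delta>\<^sup>2"
  have Npos: "real (card ?U) > 0" using subsets_card[of m \<beta>] b zero_less_binomial_iff by simp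
  have "(\<Sum>t\<in>?U. (infdist (skm_step a b \<delta> t y) (feas m a b))\<^sup>2) / real (card ?U)
     \<le> (\<Sum>t\<in>?U. ?d - ?e * (resid a b y (pick a b y t))\<^sup>2) / real (card ?U)"
  proof (intro divide_right_mono sum_mono)
    fix t assume "t \<in> ?U"
    from subsets_elem[OF this] have h: "t \<subseteq> {..<m}" "card t = \<beta>" "finite t" by auto
    hence "t \<subseteq> {..<m}" "t \<noteq> {}" using b by auto
    thus "(infdist (skm_step a b \<delta> t y) (feas m a b))\<^sup>2 \<le> ?d - ?e * (resid a b y (pick a b y t))\<^sup>2"
      by (rule one_step[OF ne rows _ _ dpos])
  qed simp
  also have "\<dots> = ?d - ?e * (2 * fobj m \<beta> a b y)"
    unfolding fobj_eq[OF b(2), of a b y] using Npos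
    by (simp add: sum_subtractf sum_distrib_left[symmetric] diff_divide_distrib sum_divide_distrib[symmetric])
  finally show ?thesis .
qed

lemma params:
  fixes h \<xi> :: real
  assumes h: "0 < h" "h < 1" and xi: "0 \<le> \<xi>" "\<xi> \<le> 1"
  defines "\<phi>1 \<equiv> (1 - \<xi>) * h"
  defines "\<phi>2 \<equiv> \<xi> * h"
  defines "\<phi> \<equiv> (- \<phi>1 + sqrt (\<phi>1\<^sup>2 + 4 * \<phi>2)) / 2"
  defines "\<rho> \<equiv> \<phi> + \<phi>1"
  shows "0 \<le> \<phi> \<and> \<phi> < 1 \<and> 0 \<le> \<phi>1 \<and> \<phi>1 < 1 \<and> 0 \<le> \<phi>2 \<and> \<phi>2 < 1 \<and> 0 < \<rho> \<and> \<rho> < 1 \<and> \<phi> * \<rho> = \<phi>2"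
proof -
  define s where "s = sqrt (\<phi>1\<^sup>2 + 4 * \<phi>2)"
  have p1: "0 \<le> \<phi>1" "\<phi>1 < 1" unfolding \<phi>1_def using h xi by (auto intro: mult_nonneg_nonneg)
    (smt (verit) mult_left_le_one_le)
  have p2: "0 \<le> \<phi>2" "\<phi>2 < 1" unfolding \<phi>2_def using h xi by (auto intro: mult_nonneg_nonneg)
    (smt (verit) mult_left_le_one_le)
  have sum12: "\<phi>1 + \<phi>2 = h" unfolding \<phi>1_def \<phi>2_def by (simp add: algebra_simps)
  have nn: "0 \<le> \<phi>1\<^sup>2 + 4 * \<phi>2" using p2(1) by (intro add_nonneg_nonneg) auto
  have s2: "s\<^sup>2 = \<phi>1\<^sup>2 + 4 * \<phi>2" unfolding s_def using nn by simp
  have s0: "s \<ge> 0" unfolding s_def using nn by simp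
  have sge: "s \<ge> \<phi>1"
  proof -
    have "\<phi>1 = sqrt (\<phi>1\<^sup>2)" using p1 by simp
    also have "\<dots> \<le> s" unfolding s_def by (rule real_sqrt_le_mono) (use p2 in simp)
    finally show ?thesis .
  qed
  have phi: "\<phi> = (s - \<phi>1) / 2" unfolding \<phi>_def s_def by simp
  have rho: "\<rho> = (s + \<phi>1) / 2" unfolding \<rho>_def phi by (simp add: field_simps)
  have prod: "\<phi> * \<rho> = \<phi>2"
  proof -
    have "\<phi> * \<rho> = (s\<^sup>2 - \<phi>1\<^sup>2) / 4" unfolding phi rho by (simp add: power2_eq_square algebra_simps)
    thus ?thesis using s2 by simp
  qed
  have phi0: "0 \<le> \<phi>" unfolding phi using sge by simp
  have rho0: "0 < \<rho>"
  proof (cases "\<phi>1 = 0")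
    case True
    hence "\<phi>2 > 0" using sum12 h by simp
    hence "0 < \<phi>1\<^sup>2 + 4 * \<phi>2" by (intro add_nonneg_pos) auto
    hence "s > 0" unfolding s_def by simp
    thus ?thesis unfolding rho using p1 by simp
  next
    case False thus ?thesis unfolding rho using p1 s0 by simp
  qed
  have rho1: "\<rho> < 1"
  proof -
    have "\<phi>1\<^sup>2 + 4 * \<phi>2 < (2 - \<phi>1)\<^sup>2" using sum12 h by (simp add: power2_eq_square algebra_simps)
    hence "s < sqrt ((2 - \<phi>1)\<^sup>2)" unfolding s_def by (rule real_sqrt_less_mono)
    also have "\<dots> = 2 - \<phi>1" using p1 by simp
    finally show ?thesis unfolding rho by simp
  qed
  have "\<phi> < 1" using rho1 p1 unfolding \<rho>_def by simp
  thus ?thesis using phi0 p1 p2 rho0 rho1 prod by simp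
qed

lemma seq_Y:
  fixes X :: "nat \<Rightarrow> real"
  assumes pars: "0 \<le> \<phi>1" "0 \<le> \<phi>2" "0 \<le> \<phi>" "\<rho> = \<phi> + \<phi>1" "\<phi> * \<rho> = \<phi>2" "0 < \<rho>"
    and init: "X 0 \<le> c" "X 1 \<le> c" and rec: "\<And>n. X (n + 2) \<le> \<phi>1 * X (n + 1) + \<phi>2 * X n"
  shows "X (n + 1) + \<phi> * X n \<le> \<rho> ^ n * (1 + \<phi>) * c"
proof (induction n)
  case 0
  have "\<phi> * X 0 \<le> \<phi> * c" using init pars by (intro mult_left_mono) auto
  thus ?case using init by (simp add: algebra_simps)
next
  case (Suc n)
  have "X (Suc n + 1) + \<phi> * X (Suc n) \<le> \<phi>1 * X (n + 1) + \<phi>2 * X n + \<phi> * X (n + 1)"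
    using rec[of n] by (simp add: add.commute)
  also have "\<dots> = \<rho> * (X (n + 1) + \<phi> * X n)"
  proof -
    have "\<phi>2 * X n = \<rho> * (\<phi> * X n)" using pars(5) by (simp add: algebra_simps)
    thus ?thesis using pars(4) by (simp add: algebra_simps)
  qed
  also have "\<dots> \<le> \<rho> * (\<rho> ^ n * (1 + \<phi>) * c)" using Suc.IH pars by (intro mult_left_mono) auto
  finally show ?case by simp
qed

lemma seq_S:
  fixes X :: "nat \<Rightarrow> real"
  assumes pars: "0 \<le> \<phi>1" "0 \<le> \<phi>2" "0 \<le> \<phi>" "\<rho> = \<phi> + \<phi>1" "\<phi> * \<rho> = \<phi>2" "0 < \<rho>"
    and init: "X 0 \<le> c" "X 1 \<le> c" and rec: "\<And>n. X (n + 2) \<le> \<phi>1 * X (n + 1) + \<phi>2 * X n"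
  shows "X n \<le> ((1 + \<phi>) / (\<phi> + \<rho>) * \<rho> ^ n - (1 - \<rho>) / (\<phi> + \<rho>) * (- \<phi>) ^ n) * c"
proof -
  define S where "S n = ((1 + \<phi>) / (\<phi> + \<rho>) * \<rho> ^ n - (1 - \<rho>) / (\<phi> + \<rho>) * (- \<phi>) ^ n) * c" for n
  have pr: "\<phi> + \<rho> > 0" using pars by simp
  have S0: "S 0 = c"
  proof -
    have "(1 + \<phi>) / (\<phi> + \<rho>) - (1 - \<rho>) / (\<phi> + \<rho>) = ((1 + \<phi>) - (1 - \<rho>)) / (\<phi> + \<rho>)"
      by (rule diff_divide_distrib[symmetric])
    also have "\<dots> = 1" using pr by simp
    finally show ?thesis unfolding S_def by simp
  qed
  have S1: "S 1 = c"
  proof -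
    have "(1 + \<phi>) / (\<phi> + \<rho>) * \<rho> - (1 - \<rho>) / (\<phi> + \<rho>) * (- \<phi>) = ((1 + \<phi>) * \<rho> + (1 - \<rho>) * \<phi>) / (\<phi> + \<rho>)"
    proof -
      have e1: "(1 + \<phi>) / (\<phi> + \<rho>) * \<rho> = ((1 + \<phi>) * \<rho>) / (\<phi> + \<rho>)" by simp
      have e2: "(1 - \<rho>) / (\<phi> + \<rho>) * (- \<phi>) = - (((1 - \<rho>) * \<phi>) / (\<phi> + \<rho>))" by simp
      show ?thesis unfolding e1 e2 by (simp only: diff_minus_eq_add add_divide_distrib)
    qed
    also have "(1 + \<phi>) * \<rho> + (1 - \<rho>) * \<phi> = \<phi> + \<rho>" by (simp add: algebra_simps)
    also have "(\<phi> + \<rho>) / (\<phi> + \<rho>) = 1" using pr by simp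
    finally show ?thesis unfolding S_def by simp
  qed
  have r2: "\<rho> * \<rho> = \<phi>1 * \<rho> + \<phi>2" using pars by (simp add: algebra_simps)
  have f2: "\<phi> * \<phi> = - \<phi>1 * \<phi> + \<phi>2" using pars by (simp add: algebra_simps)
  have Srec: "S (n + 2) = \<phi>1 * S (n + 1) + \<phi>2 * S n" for n
  proof -
    have a: "\<rho> ^ (n + 2) = \<phi>1 * \<rho> ^ (n + 1) + \<phi>2 * \<rho> ^ n"
    proof -
      have "\<rho> ^ (n + 2) = \<rho> ^ n * (\<rho> * \<rho>)" by (simp add: power_add power2_eq_square)
      also have "\<dots> = \<rho> ^ n * (\<phi>1 * \<rho> + \<phi>2)" unfolding r2 ..
      also have "\<dots> = \<phi>1 * (\<rho> ^ n * \<rho>) + \<phi>2 * \<rho> ^ n" by (simp add: algebra_simps)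
      finally show ?thesis by (simp add: power_add)
    qed
    have b: "(- \<phi>) ^ (n + 2) = \<phi>1 * (- \<phi>) ^ (n + 1) + \<phi>2 * (- \<phi>) ^ n"
    proof -
      have "(- \<phi>) ^ (n + 2) = (- \<phi>) ^ n * (\<phi> * \<phi>)" by (simp add: power_add power2_eq_square)
      also have "\<dots> = (- \<phi>) ^ n * (- \<phi>1 * \<phi> + \<phi>2)" unfolding f2 ..
      also have "\<dots> = \<phi>1 * ((- \<phi>) ^ n * (- \<phi>)) + \<phi>2 * (- \<phi>) ^ n" by (simp add: algebra_simps)
      finally show ?thesis by (simp add: power_add)
    qed
    define A where "A = (1 + \<phi>) / (\<phi> + \<rho>)"
    define B where "B = (1 - \<rho>) / (\<phi> + \<rho>)"
    show ?thesis unfolding S_def a b A_def[symmetric] B_def[symmetric] by (simp add: algebra_simps)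
  qed
  have "X n \<le> S n \<and> X (n + 1) \<le> S (n + 1)"
  proof (induction n)
    case 0 thus ?case using S0 S1 init by simp
  next
    case (Suc n)
    have "X (n + 2) \<le> \<phi>1 * X (n + 1) + \<phi>2 * X n" by (rule rec)
    also have "\<dots> \<le> \<phi>1 * S (n + 1) + \<phi>2 * S n"
      using Suc.IH pars by (intro add_mono mult_left_mono) auto
    also have "\<dots> = S (n + 2)" by (rule Srec[symmetric])
    finally show ?case using Suc.IH by simp
  qed
  thus ?thesis unfolding S_def by simp
qed

lemma Exp_cong:
  assumes "\<beta> \<le> m" "\<And>ts. ts \<in> sample_seqs m \<beta> N \<Longrightarrow> g ts = h ts"
  shows "Exp m \<beta> N g = Exp m \<beta> N h"
  using Exp_mono[OF assms(1), of N g h] Exp_mono[OF assms(1), of N h g] assms(2) by fastforce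

lemma marg_x:
  assumes "\<beta> \<le> m" "l \<le> M + 1" "M \<le> N"
  shows "Exp m \<beta> N (\<lambda>ts. G (gskm_x a b \<delta> \<xi> x0 ts l)) = Exp m \<beta> M (\<lambda>ts. G (gskm_x a b \<delta> \<xi> x0 ts l))"
proof (rule Exp_marg[OF assms(1) _ assms(3)])
  fix ts :: "nat set list" and t assume "M \<le> length ts"
  hence "l \<le> length ts + 1" using assms(2) by simp
  thus "G (gskm_x a b \<delta> \<xi> x0 (ts @ [t]) l) = G (gskm_x a b \<delta> \<xi> x0 ts l)" by (simp only: x_append)
qed

lemma marg_z:
  assumes "\<beta> \<le> m" "1 \<le> l" "l \<le> M" "M \<le> N"
  shows "Exp m \<beta> N (\<lambda>ts. G (skm_step a b \<delta> (ts ! (l - 1)) (gskm_x a b \<delta> \<xi> x0 ts l)))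
       = Exp m \<beta> M (\<lambda>ts. G (skm_step a b \<delta> (ts ! (l - 1)) (gskm_x a b \<delta> \<xi> x0 ts l)))"
proof (rule Exp_marg[OF assms(1) _ assms(4)])
  fix ts :: "nat set list" and t assume "M \<le> length ts"
  hence "(ts @ [t]) ! (l - 1) = ts ! (l - 1)" "l \<le> length ts + 1" using assms by (auto simp: nth_append)
  thus "G (skm_step a b \<delta> ((ts @ [t]) ! (l - 1)) (gskm_x a b \<delta> \<xi> x0 (ts @ [t]) l))
      = G (skm_step a b \<delta> (ts ! (l - 1)) (gskm_x a b \<delta> \<xi> x0 ts l))" by (simp only: x_append)
qed

lemma D_step:
  fixes a :: "nat \<Rightarrow> real^'n"
  assumes ne: "feas m a b \<noteq> {}" and rows: "\<forall>i<m. norm (a i) = 1"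
    and b: "1 \<le> \<beta>" "\<beta> \<le> m" and dpos: "0 < \<delta>"
  shows "Exp m \<beta> (Suc N) (\<lambda>ts. (infdist (skm_step a b \<delta> (ts ! (Suc N - 1)) (gskm_x a b \<delta> \<xi> x0 ts (Suc N))) (feas m a b))\<^sup>2)
    \<le> Exp m \<beta> (Suc N) (\<lambda>ts. (infdist (gskm_x a b \<delta> \<xi> x0 ts (Suc N)) (feas m a b))\<^sup>2)
       - (2 * \<delta> - \<delta>\<^sup>2) * (2 * Exp m \<beta> (Suc N) (\<lambda>ts. fobj m \<beta> a b (gskm_x a b \<delta> \<xi> x0 ts (Suc N))))"
proof -
  let ?x = "gskm_x a b \<delta> \<xi> x0"
  let ?P = "feas m a b"
  let ?U = "subsets_of m \<beta>"
  have "Exp m \<beta> (Suc N) (\<lambda>ts. (infdist (skm_step a b \<delta> (ts ! (Suc N - 1)) (?x ts (Suc N))) ?P)\<^sup>2)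
     = Exp m \<beta> N (\<lambda>ts. (\<Sum>t\<in>?U. (infdist (skm_step a b \<delta> ((ts @ [t]) ! N) (?x (ts @ [t]) (Suc N))) ?P)\<^sup>2) / real (card ?U))"
    using Exp_Suc[OF b(2)] by simp
  also have "\<dots> = Exp m \<beta> N (\<lambda>ts. (\<Sum>t\<in>?U. (infdist (skm_step a b \<delta> t (?x ts (Suc N))) ?P)\<^sup>2) / real (card ?U))"
  proof (rule Exp_cong[OF b(2)])
    fix ts assume "ts \<in> sample_seqs m \<beta> N"
    hence l: "length ts = N" by (simp add: sample_seqs_def)
    show "(\<Sum>t\<in>?U. (infdist (skm_step a b \<delta> ((ts @ [t]) ! N) (?x (ts @ [t]) (Suc N))) ?P)\<^sup>2) / real (card ?U)
      = (\<Sum>t\<in>?U. (infdist (skm_step a b \<delta> t (?x ts (Suc N))) ?P)\<^sup>2) / real (card ?U)"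
    proof -
      have "\<And>t. (ts @ [t]) ! N = t" using l by (simp add: nth_append)
      moreover have "\<And>t. ?x (ts @ [t]) (Suc N) = ?x ts (Suc N)" using l by (simp add: x_append)
      ultimately
      show ?thesis by simp
    qed
  qed
  also have "\<dots> \<le> Exp m \<beta> N (\<lambda>ts. (infdist (?x ts (Suc N)) ?P)\<^sup>2 - (2 * \<delta> - \<delta>\<^sup>2) * (2 * fobj m \<beta> a b (?x ts (Suc N))))"
    by (rule Exp_mono[OF b(2)]) (rule avg_step[OF ne rows b dpos])
  also have "\<dots> = Exp m \<beta> N (\<lambda>ts. 1 * (infdist (?x ts (Suc N)) ?P)\<^sup>2 + (- (2 * (2 * \<delta> - \<delta>\<^sup>2))) * fobj m \<beta> a b (?x ts (Suc N)))"
    by (simp add: algebra_simps)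
  also have "\<dots> = Exp m \<beta> N (\<lambda>ts. (infdist (?x ts (Suc N)) ?P)\<^sup>2) - (2 * \<delta> - \<delta>\<^sup>2) * (2 * Exp m \<beta> N (\<lambda>ts. fobj m \<beta> a b (?x ts (Suc N))))"
    unfolding Exp_lin[OF b(2)] by (simp add: algebra_simps)
  also have "Exp m \<beta> N (\<lambda>ts. (infdist (?x ts (Suc N)) ?P)\<^sup>2) = Exp m \<beta> (Suc N) (\<lambda>ts. (infdist (?x ts (Suc N)) ?P)\<^sup>2)"
    by (rule marg_x[OF b(2), symmetric]) auto
  also have "Exp m \<beta> N (\<lambda>ts. fobj m \<beta> a b (?x ts (Suc N))) = Exp m \<beta> (Suc N) (\<lambda>ts. fobj m \<beta> a b (?x ts (Suc N)))"
    by (rule marg_x[OF b(2), symmetric]) auto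
  finally show ?thesis .
qed

lemma fobj_mu1:
  fixes a :: "nat \<Rightarrow> real^'n"
  assumes b: "1 \<le> \<beta>" "\<beta> \<le> m" and L: "L > 0"
    and hoff: "(infdist y P)\<^sup>2 \<le> L\<^sup>2 * (\<Sum>i<m. (resid a b y i)\<^sup>2)"
  shows "1 / (real m * L\<^sup>2) * (infdist y P)\<^sup>2 \<le> 2 * fobj m \<beta> a b y"
proof -
  have mpos: "real m > 0" using b by simp
  have "1 / (real m * L\<^sup>2) * (infdist y P)\<^sup>2 \<le> 1 / (real m * L\<^sup>2) * (L\<^sup>2 * (\<Sum>i<m. (resid a b y i)\<^sup>2))"
    using hoff mpos L by (intro mult_left_mono) auto
  also have "\<dots> = (1 / real m) * (\<Sum>i<m. (resid a b y i)\<^sup>2)" using L by (simp add: field_simps)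
  also have "\<dots> \<le> 2 * fobj m \<beta> a b y" by (rule fobj_lower[OF b])
  finally show ?thesis .
qed

lemma fobj_mu2:
  fixes a :: "nat \<Rightarrow> real^'n"
  assumes ne: "feas m a b \<noteq> {}" and rows: "\<forall>i<m. norm (a i) = 1" and b: "1 \<le> \<beta>" "\<beta> \<le> m"
  shows "2 * fobj m \<beta> a b y \<le> min 1 (real \<beta> / real m * lambda_max (AtA m a)) * (infdist y (feas m a b))\<^sup>2"
proof -
  obtain p where p: "p \<in> feas m a b" "infdist y (feas m a b) = norm (y - p)" using proj_exists[OF ne] by blast
  let ?d = "(infdist y (feas m a b))\<^sup>2"
  have A: "2 * fobj m \<beta> a b y \<le> ?d"
  proof (rule fobj_le_sq[OF b], intro ballI)
    fix \<tau> assume t: "\<tau> \<in> subsets_of m \<beta>"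
    from subsets_elem[OF t] have h: "\<tau> \<subseteq> {..<m}" "card \<tau> = \<beta>" "finite \<tau>" by auto
    hence "\<tau> \<noteq> {}" using b by auto
    hence "pick a b y \<tau> \<in> \<tau>" using pick_props[OF h(3)] by blast
    hence "pick a b y \<tau> < m" using h by auto
    hence "resid a b y (pick a b y \<tau>) \<le> norm (y - p)" using resid_le_norm[OF p(1)] rows by blast
    thus "(resid a b y (pick a b y \<tau>))\<^sup>2 \<le> ?d" using p(2) by (simp add: power_mono resid_nonneg)
  qed
  have "(\<Sum>i<m. (resid a b y i)\<^sup>2) \<le> (\<Sum>i<m. (a i \<bullet> (y - p))\<^sup>2)"
  proof (rule sum_mono)
    fix i assume "i \<in> {..<m}"
    hence "resid a b y i \<le> \<bar>a i \<bullet> (y - p)\<bar>" using resid_le_dist[OF p(1)] rows by auto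
    hence "(resid a b y i)\<^sup>2 \<le> (\<bar>a i \<bullet> (y - p)\<bar>)\<^sup>2" by (rule power_mono) (simp add: resid_nonneg)
    thus "(resid a b y i)\<^sup>2 \<le> (a i \<bullet> (y - p))\<^sup>2" by simp
  qed
  also have "\<dots> = qf m a (y - p)" by (simp add: qf_def)
  also have "\<dots> \<le> lambda_max (AtA m a) * ?d" using lambda_max_bound[of m a] p(2) by simp
  finally have "(\<Sum>i<m. (resid a b y i)\<^sup>2) \<le> lambda_max (AtA m a) * ?d" .
  hence "real \<beta> / real m * (\<Sum>i<m. (resid a b y i)\<^sup>2) \<le> real \<beta> / real m * (lambda_max (AtA m a) * ?d)"
    by (intro mult_left_mono) auto
  hence B: "2 * fobj m \<beta> a b y \<le> real \<beta> / real m * lambda_max (AtA m a) * ?d"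
    using fobj_upper[OF b, of a b y] by simp
  show ?thesis using A B by (cases "1 \<le> real \<beta> / real m * lambda_max (AtA m a)") (auto simp: min_def)
qed

theorem theorem3:
  fixes m \<beta> :: nat and a :: "nat \<Rightarrow> real^'n" and b :: "nat \<Rightarrow> real"
    and L \<delta> \<xi> :: real and x0 :: "real^'n"
  defines "P \<equiv> feas m a b"
  defines "x \<equiv> gskm_x a b \<delta> \<xi> x0"
  defines "d0 \<equiv> infdist x0 P"
  defines "\<mu>1 \<equiv> 1 / (real m * L\<^sup>2)"
  defines "\<mu>2 \<equiv> min 1 (real \<beta> / real m * lambda_max (AtA m a))"
  defines "\<eta> \<equiv> 2 * \<delta> - \<delta>\<^sup>2"
  defines "h \<equiv> 1 - \<eta> * \<mu>1"
  defines "\<phi>1 \<equiv> (1 - \<xi>) * h"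
  defines "\<phi>2 \<equiv> \<xi> * h"
  defines "\<phi> \<equiv> (- \<phi>1 + sqrt (\<phi>1\<^sup>2 + 4 * \<phi>2)) / 2"
  defines "\<rho> \<equiv> \<phi> + \<phi>1"
  defines "R1 \<equiv> (1 + \<phi>) / (\<phi> + \<rho>)"
  defines "R2 \<equiv> (1 - \<rho>) / (\<phi> + \<rho>)"
  defines "R3 \<equiv> (\<rho> + \<phi>2) / (\<phi> + \<rho>)"
  defines "R4 \<equiv> (\<phi> - \<phi>2) / (\<phi> + \<rho>)"
  assumes m_pos: "1 \<le> m"
    and beta: "1 \<le> \<beta>" "\<beta> \<le> m"
    and rows_normalized: "\<forall>i<m. norm (a i) = 1"
    and consistent: "P \<noteq> {}"
    and L_pos: "L > 0"
    and hoffman: "\<forall>y. (infdist y P)\<^sup>2 \<le> L\<^sup>2 * (\<Sum>i<m. (resid a b y i)\<^sup>2)"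
    and delta: "0 < \<delta>" "\<delta> < 2"
    and xi: "0 \<le> \<xi>" "\<xi> \<le> 1"
    and h_pos: "h > 0"
  shows
    "(\<lambda>k. Exp m \<beta> k (\<lambda>ts. (infdist (x ts k) P)\<^sup>2)) \<longlonglongrightarrow> 0
   \<and> (0 \<le> \<phi> \<and> \<phi> < 1 \<and> 0 \<le> \<phi>1 \<and> \<phi>1 < 1 \<and> 0 \<le> \<phi>2 \<and> \<phi>2 < 1 \<and> 0 < \<rho> \<and> \<rho> < 1)
   \<and> (\<forall>k\<ge>1.
        Exp m \<beta> (k + 1) (\<lambda>ts. (infdist (x ts (k + 1)) P)\<^sup>2) \<le> \<rho> ^ k * (1 + \<phi>) * d0\<^sup>2
      \<and> Exp m \<beta> (k + 1) (\<lambda>ts. fobj m \<beta> a b (x ts (k + 1))) \<le> \<mu>2 * (1 + \<phi>) / 2 * \<rho> ^ k * d0\<^sup>2)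
   \<and> (\<forall>k\<ge>1. even k \<longrightarrow>
        Exp m \<beta> (k + 1) (\<lambda>ts. (infdist (x ts (k + 1)) P)\<^sup>2) \<le> (R1 * \<rho> ^ (k + 1) + R2 * \<phi> ^ (k + 1)) * d0\<^sup>2
      \<and> Exp m \<beta> k (\<lambda>ts. (infdist (x ts k) P)\<^sup>2) \<le> (R1 * \<rho> ^ k - R2 * \<phi> ^ k) * d0\<^sup>2)
   \<and> (\<forall>k\<ge>1. odd k \<longrightarrow>
        Exp m \<beta> (k + 1) (\<lambda>ts. (infdist (x ts (k + 1)) P)\<^sup>2) \<le> (R3 * \<rho> ^ k - R4 * \<phi> ^ k) * d0\<^sup>2
      \<and> Exp m \<beta> k (\<lambda>ts. (infdist (x ts k) P)\<^sup>2) \<le> (R3 * \<rho> ^ (k - 1) + R4 * \<phi> ^ (k - 1)) * d0\<^sup>2)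
   \<and> (\<forall>k\<ge>1.
        Exp m \<beta> k (\<lambda>ts. (infdist ((1 / real k) *\<^sub>R (\<Sum>l=1..k. x ts l)) P)\<^sup>2)
          \<le> (1 + \<phi>) * d0\<^sup>2 / (real k * (1 - \<rho>))
      \<and> Exp m \<beta> k (\<lambda>ts. fobj m \<beta> a b ((1 / real k) *\<^sub>R (\<Sum>l=1..k. x ts l)))
          \<le> (1 + \<xi>) * d0\<^sup>2 / (2 * \<delta> * real k * (2 - \<delta>)))"
proof -
  have bm: "\<beta> \<le> m" using beta by simp
  have b1: "1 \<le> \<beta>" using beta by simp
  have ne: "feas m a b \<noteq> {}" using consistent unfolding P_def .
  define X where "X n = Exp m \<beta> n (\<lambda>ts. (infdist (x ts n) P)\<^sup>2)" for n
  define D where "D n = Exp m \<beta> n (\<lambda>ts. (infdist (skm_step a b \<delta> (ts ! (n - 1)) (x ts n)) P)\<^sup>2)" for n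
  define F where "F n = Exp m \<beta> n (\<lambda>ts. fobj m \<beta> a b (x ts n))" for n
  have eta_eq: "\<eta> = \<delta> * (2 - \<delta>)" unfolding \<eta>_def by (simp add: power2_eq_square algebra_simps)
  have eta_pos: "\<eta> > 0" unfolding eta_eq using delta by simp
  have mu1_pos: "\<mu>1 > 0" using m_pos L_pos unfolding \<mu>1_def by simp
  have h1: "h < 1" unfolding h_def using eta_pos mu1_pos by simp
  have par: "0 \<le> \<phi> \<and> \<phi> < 1 \<and> 0 \<le> \<phi>1 \<and> \<phi>1 < 1 \<and> 0 \<le> \<phi>2 \<and> \<phi>2 < 1 \<and> 0 < \<rho> \<and> \<rho> < 1 \<and> \<phi> * \<rho> = \<phi>2"
    unfolding \<rho>_def \<phi>_def \<phi>1_def \<phi>2_def using params[OF h_pos h1 xi] by blast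
  have d0sq: "d0\<^sup>2 \<ge> 0" by simp
  have X0: "X 0 = d0\<^sup>2" unfolding X_def x_def d0_def by (simp add: x_0 Exp_const[OF bm])
  have X1: "X 1 = d0\<^sup>2" unfolding X_def x_def d0_def by (simp add: gskm_x_def Exp_const[OF bm])
  have Xnn: "X n \<ge> 0" for n
    using Exp_mono[OF bm, of n "\<lambda>_. 0" "\<lambda>ts. (infdist (x ts n) P)\<^sup>2"] Exp_const[OF bm] unfolding X_def by simp
  have Dnn: "D n \<ge> 0" for n
    using Exp_mono[OF bm, of n "\<lambda>_. 0" "\<lambda>ts. (infdist (skm_step a b \<delta> (ts ! (n - 1)) (x ts n)) P)\<^sup>2"] Exp_const[OF bm]
    unfolding D_def by simp
  have Dstep: "D n \<le> X n - \<eta> * (2 * F n)" if n1: "1 \<le> n" for n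
  proof -
    obtain N where N: "n = Suc N" using n1 by (cases n) auto
    show ?thesis unfolding N D_def X_def F_def x_def P_def \<eta>_def
      by (rule D_step[OF ne rows_normalized b1 bm delta(1)])
  qed
  have Fmu1: "\<mu>1 * X n \<le> 2 * F n" for n
  proof -
    have "\<mu>1 * X n = Exp m \<beta> n (\<lambda>ts. \<mu>1 * (infdist (x ts n) P)\<^sup>2)" unfolding X_def by (rule Exp_cmult[OF bm, symmetric])
    also have "\<dots> \<le> Exp m \<beta> n (\<lambda>ts. 2 * fobj m \<beta> a b (x ts n))"
    proof (rule Exp_mono[OF bm])
      fix ts
      show "\<mu>1 * (infdist (x ts n) P)\<^sup>2 \<le> 2 * fobj m \<beta> a b (x ts n)"
        unfolding \<mu>1_def by (rule fobj_mu1[OF b1 bm L_pos]) (use hoffman in blast)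
    qed
    also have "\<dots> = 2 * F n" unfolding F_def by (rule Exp_cmult[OF bm])
    finally show ?thesis .
  qed
  have Dh: "D n \<le> h * X n" if "1 \<le> n" for n
  proof -
    have "\<eta> * (\<mu>1 * X n) \<le> \<eta> * (2 * F n)" using Fmu1[of n] eta_pos by (intro mult_left_mono) auto
    thus ?thesis using Dstep[OF that] unfolding h_def by (simp add: algebra_simps)
  qed
  have convd: "(infdist ((1 - \<xi>) *\<^sub>R u + \<xi> *\<^sub>R v) P)\<^sup>2 \<le> (1 - \<xi>) * (infdist u P)\<^sup>2 + \<xi> * (infdist v P)\<^sup>2" for u v
    using convex_onD[OF infdist_sq_convex_on[OF ne], of \<xi> u v] xi unfolding P_def by simp
  have Xz: "X (j + 2) \<le> (1 - \<xi>) * D (j + 1) + \<xi> * (if j = 0 then D 1 else D j)" for j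
  proof (cases "j = 0")
    case True
    have "X 2 = Exp m \<beta> 2 (\<lambda>ts. (infdist (skm_step a b \<delta> (ts ! (1 - 1)) (gskm_x a b \<delta> \<xi> x0 ts 1)) P)\<^sup>2)"
      unfolding X_def x_def by (simp add: x_2 x_1[simplified])
    also have "\<dots> = D 1" unfolding D_def x_def by (rule marg_z[OF bm]) auto
    finally show ?thesis using True by (simp add: algebra_simps numeral_2_eq_2)
  next
    case False
    hence j1: "1 \<le> j" by simp
    have "X (j + 2) \<le> Exp m \<beta> (j + 2) (\<lambda>ts. (1 - \<xi>) * (infdist (skm_step a b \<delta> (ts ! (Suc j - 1)) (x ts (Suc j))) P)\<^sup>2
              + \<xi> * (infdist (skm_step a b \<delta> (ts ! (j - 1)) (x ts j)) P)\<^sup>2)"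
      unfolding X_def
    proof (rule Exp_mono[OF bm])
      fix ts
      show "(infdist (x ts (j + 2)) P)\<^sup>2 \<le> (1 - \<xi>) * (infdist (skm_step a b \<delta> (ts ! (Suc j - 1)) (x ts (Suc j))) P)\<^sup>2
              + \<xi> * (infdist (skm_step a b \<delta> (ts ! (j - 1)) (x ts j)) P)\<^sup>2"
        unfolding x_def x_rec[OF j1] using convd unfolding x_def by simp
    qed
    also have "\<dots> = (1 - \<xi>) * Exp m \<beta> (j + 2) (\<lambda>ts. (infdist (skm_step a b \<delta> (ts ! (Suc j - 1)) (x ts (Suc j))) P)\<^sup>2)
        + \<xi> * Exp m \<beta> (j + 2) (\<lambda>ts. (infdist (skm_step a b \<delta> (ts ! (j - 1)) (x ts j)) P)\<^sup>2)"
      by (rule Exp_lin[OF bm])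
    also have "Exp m \<beta> (j + 2) (\<lambda>ts. (infdist (skm_step a b \<delta> (ts ! (Suc j - 1)) (x ts (Suc j))) P)\<^sup>2) = D (j + 1)"
      unfolding D_def x_def using marg_z[OF bm, of "Suc j" "Suc j" "j + 2"] by simp
    also have "Exp m \<beta> (j + 2) (\<lambda>ts. (infdist (skm_step a b \<delta> (ts ! (j - 1)) (x ts j)) P)\<^sup>2) = D j"
      unfolding D_def x_def using marg_z[OF bm, of j j "j + 2"] j1 by simp
    finally show ?thesis using False by simp
  qed
  have Xrec: "X (n + 2) \<le> \<phi>1 * X (n + 1) + \<phi>2 * X n" for n
  proof (cases "n = 0")
    case True
    have "X 2 \<le> D 1" using Xz[of 0] by (simp add: algebra_simps numeral_2_eq_2)
    also have "\<dots> \<le> h * X 1" using Dh[of 1] by simp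
    also have "\<dots> = \<phi>1 * X 1 + \<phi>2 * X 0" unfolding \<phi>1_def \<phi>2_def X0 X1 by (simp add: algebra_simps)
    finally show ?thesis using True by (simp add: numeral_2_eq_2)
  next
    case False
    have "X (n + 2) \<le> (1 - \<xi>) * D (n + 1) + \<xi> * D n" using Xz[of n] False by simp
    also have "\<dots> \<le> (1 - \<xi>) * (h * X (n + 1)) + \<xi> * (h * X n)"
      using Dh[of "n + 1"] Dh[of n] False xi by (intro add_mono mult_left_mono) auto
    also have "\<dots> = \<phi>1 * X (n + 1) + \<phi>2 * X n" unfolding \<phi>1_def \<phi>2_def by (simp add: algebra_simps)
    finally show ?thesis .
  qed
  have parsY: "0 \<le> \<phi>1" "0 \<le> \<phi>2" "0 \<le> \<phi>" "\<rho> = \<phi> + \<phi>1" "\<phi> * \<rho> = \<phi>2" "0 < \<rho>"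
    using par \<rho>_def by auto
  have Xb: "X (n + 1) \<le> \<rho> ^ n * (1 + \<phi>) * d0\<^sup>2" for n
  proof -
    have "X (n + 1) + \<phi> * X n \<le> \<rho> ^ n * (1 + \<phi>) * d0\<^sup>2"
      by (rule seq_Y[OF parsY]) (use X0 X1 Xrec in auto)
    moreover have "\<phi> * X n \<ge> 0" using par Xnn by simp
    ultimately show ?thesis by simp
  qed
  have Sb: "X n \<le> (R1 * \<rho> ^ n - R2 * (- \<phi>) ^ n) * d0\<^sup>2" for n
    unfolding R1_def R2_def by (rule seq_S[OF parsY]) (use X0 X1 Xrec in auto)
  have lmax: "lambda_max (AtA m a) \<ge> 0" using lambda_max_bound[of m a] by simp
  have mu2nn: "\<mu>2 \<ge> 0" unfolding \<mu>2_def using lmax by simp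
  have Fmu2: "F n \<le> \<mu>2 / 2 * X n" for n
  proof -
    have "F n \<le> Exp m \<beta> n (\<lambda>ts. \<mu>2 / 2 * (infdist (x ts n) P)\<^sup>2)"
      unfolding F_def
    proof (rule Exp_mono[OF bm])
      fix ts
      show "fobj m \<beta> a b (x ts n) \<le> \<mu>2 / 2 * (infdist (x ts n) P)\<^sup>2"
        using fobj_mu2[OF ne rows_normalized b1 bm, of "x ts n"] unfolding \<mu>2_def P_def by simp
    qed
    also have "\<dots> = \<mu>2 / 2 * X n" unfolding X_def by (rule Exp_cmult[OF bm])
    finally show ?thesis .
  qed
  have C1: "(\<lambda>k. X k) \<longlonglongrightarrow> 0"
  proof -
    have lim: "(\<lambda>k. \<rho> ^ k * (1 + \<phi>) * d0\<^sup>2) \<longlonglongrightarrow> 0"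
      using par by (auto intro!: tendsto_eq_intros LIMSEQ_power_zero)
    have "(\<lambda>k. X (Suc k)) \<longlonglongrightarrow> 0"
      by (rule tendsto_sandwich[OF _ _ tendsto_const lim]) (use Xnn Xb in auto)
    thus ?thesis using filterlim_sequentially_Suc[of X] by simp
  qed
  have C3: "\<forall>k\<ge>1. X (k + 1) \<le> \<rho> ^ k * (1 + \<phi>) * d0\<^sup>2 \<and> F (k + 1) \<le> \<mu>2 * (1 + \<phi>) / 2 * \<rho> ^ k * d0\<^sup>2"
  proof (intro allI impI conjI)
    fix k :: nat
    show "X (k + 1) \<le> \<rho> ^ k * (1 + \<phi>) * d0\<^sup>2" by (rule Xb)
    have "F (k + 1) \<le> \<mu>2 / 2 * X (k + 1)" by (rule Fmu2)
    also have "\<dots> \<le> \<mu>2 / 2 * (\<rho> ^ k * (1 + \<phi>) * d0\<^sup>2)" using mu2nn Xb[of k] by (intro mult_left_mono) auto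
    finally show "F (k + 1) \<le> \<mu>2 * (1 + \<phi>) / 2 * \<rho> ^ k * d0\<^sup>2" by (simp add: algebra_simps)
  qed
  have C4: "\<forall>k\<ge>1. even k \<longrightarrow> X (k + 1) \<le> (R1 * \<rho> ^ (k + 1) + R2 * \<phi> ^ (k + 1)) * d0\<^sup>2 \<and> X k \<le> (R1 * \<rho> ^ k - R2 * \<phi> ^ k) * d0\<^sup>2"
  proof (intro allI impI conjI)
    fix k :: nat assume "even k"
    hence "(- \<phi>) ^ (k + 1) = - (\<phi> ^ (k + 1))" "(- \<phi>) ^ k = \<phi> ^ k" by simp_all
    thus "X (k + 1) \<le> (R1 * \<rho> ^ (k + 1) + R2 * \<phi> ^ (k + 1)) * d0\<^sup>2" "X k \<le> (R1 * \<rho> ^ k - R2 * \<phi> ^ k) * d0\<^sup>2"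
      using Sb[of "k + 1"] Sb[of k] by simp_all
  qed
  have R13: "R1 * \<rho> = R3" unfolding R1_def R3_def using par by (simp add: algebra_simps)
  have R24: "R2 * \<phi> = R4" unfolding R2_def R4_def using par by (simp add: algebra_simps)
  have C5: "\<forall>k\<ge>1. odd k \<longrightarrow> X (k + 1) \<le> (R3 * \<rho> ^ k - R4 * \<phi> ^ k) * d0\<^sup>2 \<and> X k \<le> (R3 * \<rho> ^ (k - 1) + R4 * \<phi> ^ (k - 1)) * d0\<^sup>2"
  proof (intro allI impI conjI)
    fix k :: nat assume k: "1 \<le> k" "odd k"
    have p1: "(- \<phi>) ^ (k + 1) = \<phi> ^ (k + 1)" by (rule power_minus_even) (use k in simp)
    have p2: "(- \<phi>) ^ k = - (\<phi> ^ k)" by (rule power_minus_odd) (use k in simp)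
    have q1: "R1 * \<rho> ^ (k + 1) = R3 * \<rho> ^ k"
    proof -
      have "R1 * \<rho> ^ (k + 1) = (R1 * \<rho>) * \<rho> ^ k" by simp
      thus ?thesis unfolding R13 .
    qed
    have q2: "R2 * \<phi> ^ (k + 1) = R4 * \<phi> ^ k"
    proof -
      have "R2 * \<phi> ^ (k + 1) = (R2 * \<phi>) * \<phi> ^ k" by simp
      thus ?thesis unfolding R24 .
    qed
    show "X (k + 1) \<le> (R3 * \<rho> ^ k - R4 * \<phi> ^ k) * d0\<^sup>2"
      using Sb[of "k + 1"] unfolding p1 q1 q2 .
    obtain j where j: "k = Suc j" using k by (cases k) auto
    have eq: "R1 * \<rho> ^ k - R2 * (- (\<phi> ^ k)) = R3 * \<rho> ^ (k - 1) + R4 * \<phi> ^ (k - 1)"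
      unfolding R13[symmetric] R24[symmetric] j by (simp add: algebra_simps)
    show "X k \<le> (R3 * \<rho> ^ (k - 1) + R4 * \<phi> ^ (k - 1)) * d0\<^sup>2"
      using Sb[of k] unfolding p2 eq .
  qed
  have C6: "\<forall>k\<ge>1. Exp m \<beta> k (\<lambda>ts. (infdist ((1 / real k) *\<^sub>R (\<Sum>l=1..k. x ts l)) P)\<^sup>2) \<le> (1 + \<phi>) * d0\<^sup>2 / (real k * (1 - \<rho>))
      \<and> Exp m \<beta> k (\<lambda>ts. fobj m \<beta> a b ((1 / real k) *\<^sub>R (\<Sum>l=1..k. x ts l))) \<le> (1 + \<xi>) * d0\<^sup>2 / (2 * \<delta> * real k * (2 - \<delta>))"
  proof (intro allI impI conjI)
    fix k :: nat assume k: "1 \<le> k"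
    have kpos: "real k > 0" using k by simp
    have wsum: "(\<Sum>l\<in>{1..k}. 1 / real k) = 1" using kpos by simp
    have avg: "(1 / real k) *\<^sub>R (\<Sum>l=1..k. x ts l) = (\<Sum>l\<in>{1..k}. (1 / real k) *\<^sub>R x ts l)" for ts
      by (simp add: scaleR_sum_right)
    have jensen: "Exp m \<beta> k (\<lambda>ts. g ((1 / real k) *\<^sub>R (\<Sum>l=1..k. x ts l))) \<le> (\<Sum>l\<in>{1..k}. 1 / real k * Exp m \<beta> l (\<lambda>ts. g (x ts l)))"
      if cg: "convex_on UNIV g" for g
    proof -
      have "Exp m \<beta> k (\<lambda>ts. g ((1 / real k) *\<^sub>R (\<Sum>l=1..k. x ts l))) \<le> Exp m \<beta> k (\<lambda>ts. \<Sum>l\<in>{1..k}. 1 / real k * g (x ts l))"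
      proof (rule Exp_mono[OF bm])
        fix ts
        show "g ((1 / real k) *\<^sub>R (\<Sum>l=1..k. x ts l)) \<le> (\<Sum>l\<in>{1..k}. 1 / real k * g (x ts l))"
          unfolding avg using k by (intro convex_on_sum[OF _ _ cg wsum]) auto
      qed
      also have "\<dots> = (\<Sum>l\<in>{1..k}. 1 / real k * Exp m \<beta> k (\<lambda>ts. g (x ts l)))"
        by (simp only: Exp_sum[OF bm] Exp_cmult[OF bm])
      also have "\<dots> = (\<Sum>l\<in>{1..k}. 1 / real k * Exp m \<beta> l (\<lambda>ts. g (x ts l)))"
      proof (rule sum.cong[OF refl])
        fix l assume "l \<in> {1..k}"
        thus "1 / real k * Exp m \<beta> k (\<lambda>ts. g (x ts l)) = 1 / real k * Exp m \<beta> l (\<lambda>ts. g (x ts l))"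
          unfolding x_def using marg_x[OF bm, of l l k] by simp
      qed
      finally show ?thesis .
    qed
    have "(\<Sum>l\<in>{1..k}. X l) \<le> (\<Sum>l\<in>{1..k}. \<rho> ^ (l - 1) * (1 + \<phi>) * d0\<^sup>2)"
    proof (rule sum_mono)
      fix l assume "l \<in> {1..k}"
      then obtain j where "l = j + 1" by (metis Suc_eq_plus1 atLeastAtMost_iff not0_implies_Suc not_one_le_zero)
      thus "X l \<le> \<rho> ^ (l - 1) * (1 + \<phi>) * d0\<^sup>2" using Xb[of j] by simp
    qed
    also have "\<dots> = (\<Sum>j<k. \<rho> ^ j) * ((1 + \<phi>) * d0\<^sup>2)"
      by (simp add: sum.atLeast1_atMost_eq sum_distrib_right mult.assoc)
    also have "\<dots> \<le> (1 / (1 - \<rho>)) * ((1 + \<phi>) * d0\<^sup>2)"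
    proof (rule mult_right_mono)
      have "(\<Sum>j<k. \<rho> ^ j) = (1 - \<rho> ^ k) / (1 - \<rho>)" using par sum_gp_strict[of \<rho> k] by simp
      also have "\<dots> \<le> 1 / (1 - \<rho>)" using par by (intro divide_right_mono) auto
      finally show "(\<Sum>j<k. \<rho> ^ j) \<le> 1 / (1 - \<rho>)" .
      show "0 \<le> (1 + \<phi>) * d0\<^sup>2" using par by simp
    qed
    finally have sumX: "(\<Sum>l\<in>{1..k}. X l) \<le> (1 / (1 - \<rho>)) * ((1 + \<phi>) * d0\<^sup>2)" .
    have "Exp m \<beta> k (\<lambda>ts. (infdist ((1 / real k) *\<^sub>R (\<Sum>l=1..k. x ts l)) P)\<^sup>2) \<le> (\<Sum>l\<in>{1..k}. 1 / real k * X l)"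
      unfolding X_def using jensen[of "\<lambda>y. (infdist y P)\<^sup>2"] infdist_sq_convex_on[OF ne] unfolding P_def by simp
    also have "\<dots> = 1 / real k * (\<Sum>l\<in>{1..k}. X l)" by (simp add: sum_distrib_left)
    also have "\<dots> \<le> 1 / real k * ((1 / (1 - \<rho>)) * ((1 + \<phi>) * d0\<^sup>2))" using sumX kpos by (intro mult_left_mono) auto
    also have "\<dots> = (1 + \<phi>) * d0\<^sup>2 / (real k * (1 - \<rho>))" by simp
    finally show "Exp m \<beta> k (\<lambda>ts. (infdist ((1 / real k) *\<^sub>R (\<Sum>l=1..k. x ts l)) P)\<^sup>2) \<le> (1 + \<phi>) * d0\<^sup>2 / (real k * (1 - \<rho>))" .
    define D' where "D' j = (if j = 0 then D 1 else D j)" for j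
    have inv: "(\<Sum>l\<in>{1..Suc j}. X l - D l) + D (Suc j) + \<xi> * D' j \<le> d0\<^sup>2 + \<xi> * D 1" for j
    proof (induction j)
      case 0 thus ?case using X1 by (simp add: D'_def)
    next
      case (Suc j)
      have "X (j + 2) \<le> (1 - \<xi>) * D (j + 1) + \<xi> * D' j" using Xz[of j] unfolding D'_def by simp
      hence "(\<Sum>l\<in>{1..Suc (Suc j)}. X l - D l) + D (Suc (Suc j)) + \<xi> * D' (Suc j)
          \<le> (\<Sum>l\<in>{1..Suc j}. X l - D l) + D (Suc j) + \<xi> * D' j"
        by (simp add: D'_def algebra_simps)
      thus ?case using Suc.IH by linarith
    qed
    obtain j where j: "k = Suc j" using k by (cases k) auto
    have D'nn: "D' j \<ge> 0" unfolding D'_def using Dnn by simp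
    have D1: "D 1 \<le> h * d0\<^sup>2" using Dh[of 1] X1 by simp
    have "\<xi> * D 1 \<le> \<xi> * (h * d0\<^sup>2)" using D1 xi by (intro mult_left_mono) auto
    also have "\<dots> \<le> \<xi> * d0\<^sup>2"
    proof (rule mult_left_mono)
      show "h * d0\<^sup>2 \<le> d0\<^sup>2" using h1 h_pos d0sq by (intro mult_left_le_one_le) auto
    qed (use xi in simp)
    finally have xiD1: "\<xi> * D 1 \<le> \<xi> * d0\<^sup>2" .
    have "(\<Sum>l\<in>{1..k}. \<eta> * (2 * F l)) \<le> (\<Sum>l\<in>{1..k}. X l - D l)"
      by (rule sum_mono) (use Dstep in fastforce)
    also have "\<dots> \<le> d0\<^sup>2 + \<xi> * D 1"
    proof -
      have i2: "(\<Sum>l\<in>{1..k}. X l - D l) + D k + \<xi> * D' j \<le> d0\<^sup>2 + \<xi> * D 1" using inv[of j] j by simp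
      have "\<xi> * D' j \<ge> 0" using xi D'nn by simp
      thus ?thesis using i2 Dnn[of k] by linarith
    qed
    also have "\<dots> \<le> (1 + \<xi>) * d0\<^sup>2" using xiD1 by (simp add: algebra_simps)
    finally have sumF: "\<eta> * 2 * (\<Sum>l\<in>{1..k}. F l) \<le> (1 + \<xi>) * d0\<^sup>2" by (simp add: sum_distrib_left mult.assoc)
    have "Exp m \<beta> k (\<lambda>ts. fobj m \<beta> a b ((1 / real k) *\<^sub>R (\<Sum>l=1..k. x ts l))) \<le> (\<Sum>l\<in>{1..k}. 1 / real k * F l)"
      unfolding F_def by (rule jensen) (rule fobj_convex[OF b1 bm])
    also have "\<dots> = (\<Sum>l\<in>{1..k}. F l) / real k" by (simp add: sum_divide_distrib)
    also have "\<dots> = (\<eta> * 2 * (\<Sum>l\<in>{1..k}. F l)) / (\<eta> * 2 * real k)" using eta_pos by simp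
    also have "\<dots> \<le> (1 + \<xi>) * d0\<^sup>2 / (\<eta> * 2 * real k)" using sumF eta_pos kpos by (intro divide_right_mono) auto
    also have "\<dots> = (1 + \<xi>) * d0\<^sup>2 / (2 * \<delta> * real k * (2 - \<delta>))" unfolding eta_eq by (simp add: algebra_simps)
    finally show "Exp m \<beta> k (\<lambda>ts. fobj m \<beta> a b ((1 / real k) *\<^sub>R (\<Sum>l=1..k. x ts l))) \<le> (1 + \<xi>) * d0\<^sup>2 / (2 * \<delta> * real k * (2 - \<delta>))" .
  qed
  show ?thesis
    using C1 par C3 C4 C5 C6 unfolding X_def F_def by blast
qed

end
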